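(* Let $H=(V,F)$ be a finite hypergraph with directed edge set $\vec{E}$, let $(r_e)_{e\in\vec E}$ be positive integers, and let $\boldsymbol{u}=\{u_{e'\rightharpoonup e}\}$ be matrix weights with $u_{e'\rightharpoonup e}\in\mathbb{C}^{r_e\times r_{e'}}$ for every pair $e'\rightharpoonup e$. Let $\mathcal{M}(\boldsymbol{u})$ be the linear operator on $\bigoplus_{e\in\vec E}\mathbb{C}^{r_e}$ given by $$(\mathcal{M}(\boldsymbol{u})f)(e)=\sum_{e':\,e'\rightharpoonup e}u_{e'\rightharpoonup e}f(e').$$ Then $$\zeta_H(\boldsymbol{u})^{-1}=\det\big(I-\mathcal{M}(\boldsymbol{u})\big),$$ where the identity is understood as an identity of formal power series in the entries of the matrices $u_{e'\rightharpoonup e}$.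
   Context: A finite hypergraph $H=(V,F)$ consists of a finite set $V$ and a finite set $F$ of nonempty subsets of $V$. Its directed edge set is $\vec E=\{(\alpha\to i):\alpha\in F,\ i\in\alpha\}$; for $e=(\alpha\to i)$ put $s(e)=\alpha$, $t(e)=i$. For $e,e'\in\vec E$ write $e'\rightharpoonup e$ if $t(e')\in s(e)$, $t(e')\neq t(e)$ and $s(e')\neq s(e)$. A closed geodesic is a sequence $(e_1,\dots,e_k)$, $k\ge1$, of directed edges with $e_l\rightharpoonup e_{l+1}$ for all $l\in\mathbb{Z}/k\mathbb{Z}$; it is prime if it is not the $m$-fold repetition of a shorter closed geodesic for some $m\ge2$; a prime cycle is an equivalence class of prime closed geodesics under cyclic permutation, and $\mathfrak{P}_H$ denotes the set of prime cycles. For $\mathfrak p=(e_1,\dots,e_k)$ set $\pi(\mathfrak p)=u_{e_k\rightharpoonup e_1}\cdots u_{e_2\rightharpoonup e_3}u_{e_1\rightharpoonup e_2}\in\mathbb{C}^{r_{e_1}\times r_{e_1}}$. The graph zeta function is $\zeta_H(\boldsymbol u)=\prod_{\mathfrak p\in\mathfrak P_H}\det(I-\pi(\mathfrak p))^{-1}$ (the determinant is independent of the representative of $\mathfrak p$). *)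

theory Defs
  imports "Jordan_Normal_Form.Determinant" "HOL-Computational_Algebra.Formal_Power_Series"
begin

type_synonym 'v dedge = "'v set \<times> 'v"

text \<open>Directed edges (alpha -> i) are pairs (alpha, i); s = fst, t = snd.\<close>
definition dedges :: "'v set set \<Rightarrow> 'v dedge set" where
  "dedges F = {(\<alpha>, i). \<alpha> \<in> F \<and> i \<in> \<alpha>}"

definition feeds :: "'v dedge \<Rightarrow> 'v dedge \<Rightarrow> bool" where
  "feeds e' e \<longleftrightarrow> snd e' \<in> fst e \<and> snd e' \<noteq> snd e \<and> fst e' \<noteq> fst e"

definition closed_geodesic :: "'v set set \<Rightarrow> 'v dedge list \<Rightarrow> bool" where
  "closed_geodesic F c \<longleftrightarrow> c \<noteq> [] \<and> set c \<subseteq> dedges F \<and>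
     (\<forall>l < length c. feeds (c ! l) (c ! (Suc l mod length c)))"

definition prime_geodesic :: "'v set set \<Rightarrow> 'v dedge list \<Rightarrow> bool" where
  "prime_geodesic F c \<longleftrightarrow> closed_geodesic F c \<and>
     \<not> (\<exists>d m. m \<ge> 2 \<and> c = concat (replicate m d))"

definition cyc_class :: "'a list \<Rightarrow> 'a list set" where
  "cyc_class c = (\<lambda>n. rotate n c) ` {..<length c}"

definition prime_cycles :: "'v set set \<Rightarrow> 'v dedge list set set" where
  "prime_cycles F = cyc_class ` {c. prime_geodesic F c}"

definition cyc_len :: "'a list set \<Rightarrow> nat" where
  "cyc_len P = length (SOME c. c \<in> P)"

text \<open>pi_aux ... l = u_{e_l -> e_{l+1}} ... u_{e_1 -> e_2} (0-based indices, cyclic).\<close>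
primrec pi_aux :: "('v dedge \<Rightarrow> nat) \<Rightarrow> ('v dedge \<Rightarrow> 'v dedge \<Rightarrow> complex mat)
    \<Rightarrow> 'v dedge list \<Rightarrow> nat \<Rightarrow> complex mat" where
  "pi_aux r u c 0 = 1\<^sub>m (r (hd c))"
| "pi_aux r u c (Suc l) = u (c ! l) (c ! (Suc l mod length c)) * pi_aux r u c l"

definition pi_mat :: "('v dedge \<Rightarrow> nat) \<Rightarrow> ('v dedge \<Rightarrow> 'v dedge \<Rightarrow> complex mat)
    \<Rightarrow> 'v dedge list \<Rightarrow> complex mat" where
  "pi_mat r u c = pi_aux r u c (length c)"

text \<open>det(I - t^k pi(p)) as a formal power series in the scaling variable t.\<close>
definition cycle_factor :: "('v dedge \<Rightarrow> nat) \<Rightarrow> ('v dedge \<Rightarrow> 'v dedge \<Rightarrow> complex mat)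
    \<Rightarrow> 'v dedge list set \<Rightarrow> complex fps" where
  "cycle_factor r u P = (let c = (SOME c. c \<in> P); A = pi_mat r u c in
     det (1\<^sub>m (dim_row A) - map_mat (\<lambda>x. fps_X ^ length c * fps_const x) A))"

text \<open>Zeta function (with weights t*u) as an infinite product of formal power series:
  the n-th coefficient is that of the finite product over prime cycles of length <= n.\<close>
definition zeta_fps :: "'v set set \<Rightarrow> ('v dedge \<Rightarrow> nat) \<Rightarrow> ('v dedge \<Rightarrow> 'v dedge \<Rightarrow> complex mat)
    \<Rightarrow> complex fps" where
  "zeta_fps F r u = Abs_fps (\<lambda>n. fps_nth
     (\<Prod>P \<in> {P \<in> prime_cycles F. cyc_len P \<le> n}. inverse (cycle_factor r u P)) n)"

text \<open>Basis of the direct sum: pairs (e, j), j < r e, with edges ordered by the list es.\<close>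
definition block_index :: "('v dedge \<Rightarrow> nat) \<Rightarrow> 'v dedge list \<Rightarrow> ('v dedge \<times> nat) list" where
  "block_index r es = concat (map (\<lambda>e. map (\<lambda>j. (e, j)) [0..<r e]) es)"

definition M_mat :: "('v dedge \<Rightarrow> nat) \<Rightarrow> ('v dedge \<Rightarrow> 'v dedge \<Rightarrow> complex mat)
    \<Rightarrow> 'v dedge list \<Rightarrow> complex mat" where
  "M_mat r u es = (let ix = block_index r es; N = length ix in
     mat N N (\<lambda>(a, b). if feeds (fst (ix ! b)) (fst (ix ! a))
        then u (fst (ix ! b)) (fst (ix ! a)) $$ (snd (ix ! a), snd (ix ! b)) else 0))"

end

theory Submission
  imports Defs "Jordan_Normal_Form.Schur_Decomposition"
begin

definition fac :: "complex \<Rightarrow> nat \<Rightarrow> complex fps" where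
  "fac c k = 1 - fps_const c * fps_X ^ k"

definition Tf :: "complex \<Rightarrow> nat \<Rightarrow> complex fps" where
  "Tf c k = Abs_fps (\<lambda>i. if k dvd Suc i then of_nat k * c ^ (Suc i div k) else 0)"

lemma Tf_nth: "fps_nth (Tf c k) i = (if k dvd Suc i then of_nat k * c ^ (Suc i div k) else 0)"
  by (simp add: Tf_def)

lemma fac_nth_Suc: "fps_nth (fac c k) (Suc i) = (if Suc i = k then - c else 0)"
  unfolding fac_def by (simp add: fps_X_power_nth)

lemma deriv_fac:
  assumes "k > 0"
  shows "fps_deriv (fac c k) = - (fac c k * Tf c k)"
proof (rule fps_ext)
  fix i
  have L: "fps_nth (fps_deriv (fac c k)) i = of_nat (Suc i) * (if Suc i = k then - c else 0)"
    unfolding fps_deriv_nth using fac_nth_Suc[of c k i] by simp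
  have E: "fac c k * Tf c k = Tf c k - fps_const c * (fps_X ^ k * Tf c k)"
    unfolding fac_def by (simp add: algebra_simps)
  have R: "fps_nth (fac c k * Tf c k) i = fps_nth (Tf c k) i - c * (if i < k then 0 else fps_nth (Tf c k) (i - k))"
    unfolding E by (simp add: fps_X_power_mult_nth)
  show "fps_nth (fps_deriv (fac c k)) i = fps_nth (- (fac c k * Tf c k)) i"
  proof (cases "i < k")
    case True
    have dv: "k dvd Suc i \<longleftrightarrow> Suc i = k"
    proof
      assume "k dvd Suc i"
      then have "k \<le> Suc i" by (rule dvd_imp_le) simp
      with True show "Suc i = k" by simp
    qed simp
    show ?thesis
    proof (cases "Suc i = k")
      case True2: True
      have "fps_nth (Tf c k) i = of_nat k * c" using True2 by (simp add: Tf_nth)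
      then show ?thesis using L R True True2 by simp
    next
      case False2: False
      have "fps_nth (Tf c k) i = 0" using False2 dv by (simp add: Tf_nth)
      then show ?thesis using L R True False2 by simp
    qed
  next
    case False
    then obtain j where j: "i = j + k" by (metis add.commute le_add_diff_inverse not_less)
    have sj: "Suc i = Suc j + k" using j by simp
    have d: "k dvd Suc i \<longleftrightarrow> k dvd Suc j" unfolding sj by (rule dvd_add_left_iff[OF dvd_refl])
    have ij: "i - k = j" using j by simp
    have t: "fps_nth (Tf c k) i = c * fps_nth (Tf c k) j"
    proof (cases "k dvd Suc j")
      case True
      have q0: "(Suc j + k) div k = Suc j div k + 1" by (rule div_add_self2) (use assms in simp)
      have q: "Suc i div k = Suc (Suc j div k)" unfolding sj q0 by simp
      show ?thesis using True d q by (simp add: Tf_nth)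
    next
      case False
      then show ?thesis using d by (simp add: Tf_nth)
    qed
    have ne: "Suc i \<noteq> k" using j by simp
    show ?thesis using L R False t ij ne by simp
  qed
qed


definition prodF :: "(complex \<times> nat) list \<Rightarrow> complex fps" where
  "prodF L = prod_list (map (\<lambda>(c,k). fac c k) L)"

definition PS :: "(complex \<times> nat) list \<Rightarrow> nat \<Rightarrow> complex" where
  "PS L m = sum_list (map (\<lambda>(c,k). if k dvd m then of_nat k * c ^ (m div k) else 0) L)"

definition SL :: "(complex \<times> nat) list \<Rightarrow> complex fps" where
  "SL L = Abs_fps (\<lambda>i. PS L (Suc i))"

lemma deriv_prodF:
  assumes "\<forall>(c,k) \<in> set L. k > 0"
  shows "fps_deriv (prodF L) = - (prodF L * SL L)"
  using assms
proof (induction L)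
  case Nil
  then show ?case by (simp add: prodF_def SL_def PS_def fps_ext)
next
  case (Cons a L)
  obtain c k where a: "a = (c,k)" by fastforce
  have k: "k > 0" using Cons.prems a by auto
  have IH: "fps_deriv (prodF L) = - (prodF L * SL L)" using Cons by auto
  have S: "SL (a # L) = Tf c k + SL L"
    by (rule fps_ext) (simp add: SL_def PS_def a Tf_def)
  have P: "prodF (a # L) = fac c k * prodF L" by (simp add: prodF_def a)
  show ?case unfolding P S fps_deriv_mult IH deriv_fac[OF k]
    by (simp add: algebra_simps)
qed

lemma prodF_0: "\<forall>(c,k) \<in> set L. k > 0 \<Longrightarrow> fps_nth (prodF L) 0 = 1"
proof (induction L)
  case Nil then show ?case by (simp add: prodF_def)
next
  case (Cons a L)
  obtain c k where a: "a = (c,k)" by fastforce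
  show ?case using Cons by (cases k) (auto simp: prodF_def a fac_def)
qed

lemma prodF_compare:
  assumes "\<forall>(c,k) \<in> set L1. k > 0" "\<forall>(c,k) \<in> set L2. k > 0"
    and "\<And>m. 1 \<le> m \<Longrightarrow> m \<le> n \<Longrightarrow> PS L1 m = PS L2 m"
  shows "i \<le> n \<Longrightarrow> fps_nth (prodF L1) i = fps_nth (prodF L2) i"
proof (induction i rule: less_induct)
  case (less i)
  show ?case
  proof (cases i)
    case 0 then show ?thesis using prodF_0 assms(1,2) by simp
  next
    case (Suc j)
    have D1: "fps_nth (fps_deriv (prodF L1)) j = - fps_nth (prodF L1 * SL L1) j"
      using deriv_prodF[OF assms(1)] by simp
    have D2: "fps_nth (fps_deriv (prodF L2)) j = - fps_nth (prodF L2 * SL L2) j"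
      using deriv_prodF[OF assms(2)] by simp
    have "fps_nth (prodF L1 * SL L1) j = fps_nth (prodF L2 * SL L2) j"
      unfolding fps_mult_nth
    proof (rule sum.cong[OF refl])
      fix x assume x: "x \<in> {0..j}"
      have "fps_nth (prodF L1) x = fps_nth (prodF L2) x" using less x Suc by auto
      moreover have "fps_nth (SL L1) (j - x) = fps_nth (SL L2) (j - x)"
        unfolding SL_def using assms(3)[of "Suc (j - x)"] x less Suc by auto
      ultimately show "fps_nth (prodF L1) x * fps_nth (SL L1) (j - x) = fps_nth (prodF L2) x * fps_nth (SL L2) (j - x)" by simp
    qed
    then have "fps_nth (fps_deriv (prodF L1)) j = fps_nth (fps_deriv (prodF L2)) j" using D1 D2 by simp
    then have "of_nat (Suc j) * fps_nth (prodF L1) (Suc j) = of_nat (Suc j) * fps_nth (prodF L2) (Suc j)"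
      by (simp add: fps_deriv_nth)
    then show ?thesis using Suc by (simp del: of_nat_Suc)
  qed
qed


definition mtrace :: "'a::comm_ring_1 mat \<Rightarrow> 'a" where
  "mtrace A = (\<Sum>i<dim_row A. A $$ (i,i))"

lemma mtrace_mult_comm:
  assumes A: "A \<in> carrier_mat n m" and B: "B \<in> carrier_mat m n"
  shows "mtrace (A * B) = mtrace (B * A)"
proof -
  have "mtrace (A * B) = (\<Sum>i<n. \<Sum>k<m. A $$ (i,k) * B $$ (k,i))"
    using A B by (simp add: mtrace_def scalar_prod_def atLeast0LessThan)
  also have "\<dots> = (\<Sum>k<m. \<Sum>i<n. B $$ (k,i) * A $$ (i,k))"
    by (subst sum.swap) (simp add: mult.commute)
  also have "\<dots> = mtrace (B * A)"
    using A B by (simp add: mtrace_def scalar_prod_def atLeast0LessThan)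
  finally show ?thesis .
qed

lemma upper_tri_mult:
  assumes A: "A \<in> carrier_mat n n" and B: "B \<in> carrier_mat n n"
    and uA: "upper_triangular A" and uB: "upper_triangular B"
  shows "upper_triangular (A * B)" "\<And>i. i < n \<Longrightarrow> (A * B) $$ (i,i) = A $$ (i,i) * B $$ (i,i)"
proof -
  show "upper_triangular (A * B)"
  proof (rule upper_triangularI)
    fix i j assume ji: "j < i" and i: "i < dim_row (A * B)"
    have "(A * B) $$ (i,j) = (\<Sum>k<n. A $$ (i,k) * B $$ (k,j))"
      using A B i ji by (simp add: scalar_prod_def atLeast0LessThan)
    also have "\<dots> = 0"
    proof (rule sum.neutral, rule ballI)
      fix k assume k: "k \<in> {..<n}"
      show "A $$ (i,k) * B $$ (k,j) = 0"
      proof (cases "k < i")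
        case True then show ?thesis using upper_triangularD[OF uA True] A i by simp
      next
        case False then have jk: "j < k" using ji by simp
        show ?thesis using upper_triangularD[OF uB jk] B k by simp
      qed
    qed
    finally show "(A * B) $$ (i,j) = 0" .
  qed
  fix i assume i: "i < n"
  have "(A * B) $$ (i,i) = (\<Sum>k<n. A $$ (i,k) * B $$ (k,i))"
    using A B i by (simp add: scalar_prod_def atLeast0LessThan)
  also have "\<dots> = (\<Sum>k\<in>{i}. A $$ (i,k) * B $$ (k,i))"
  proof (rule sum.mono_neutral_right)
    show "\<forall>k\<in>{..<n} - {i}. A $$ (i, k) * B $$ (k, i) = 0"
    proof
      fix k assume k: "k \<in> {..<n} - {i}"
      show "A $$ (i, k) * B $$ (k, i) = 0"
      proof (cases "k < i")
        case True then show ?thesis using upper_triangularD[OF uA True] A i by simp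
      next
        case False then have ik: "i < k" using k by auto
        show ?thesis using upper_triangularD[OF uB ik] B k by simp
      qed
    qed
  qed (use i in auto)
  finally show "(A * B) $$ (i,i) = A $$ (i,i) * B $$ (i,i)" by simp
qed

lemma upper_tri_pow:
  assumes A: "A \<in> carrier_mat n n" and uA: "upper_triangular A"
  shows "upper_triangular (A ^\<^sub>m m) \<and> (\<forall>i<n. (A ^\<^sub>m m) $$ (i,i) = A $$ (i,i) ^ m)"
proof (induction m)
  case 0 then show ?case using A by auto
next
  case (Suc m)
  have P: "A ^\<^sub>m m \<in> carrier_mat n n" using A by simp
  show ?case
  proof (intro conjI allI impI)
    show "upper_triangular (A ^\<^sub>m Suc m)" using upper_tri_mult(1)[OF P A _ uA] Suc by simp
    fix i assume i: "i < n"
    have "(A ^\<^sub>m Suc m) $$ (i,i) = (A ^\<^sub>m m) $$ (i,i) * A $$ (i,i)"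
      using upper_tri_mult(2)[OF P A _ uA i] Suc by simp
    also have "\<dots> = A $$ (i,i) ^ Suc m" using Suc i by (simp add: power_commutes)
    finally show "(A ^\<^sub>m Suc m) $$ (i,i) = A $$ (i,i) ^ Suc m" .
  qed
qed

interpretation fpsc: comm_ring_hom "fps_const :: complex \<Rightarrow> complex fps"
  by unfold_locales (auto simp: fps_const_add fps_const_mult)

lemma eigen_decomp:
  fixes B :: "complex mat"
  assumes B: "B \<in> carrier_mat n n"
  shows "\<exists>ls. length ls = n \<and>
    (\<forall>Y. det (1\<^sub>m n - map_mat (\<lambda>x. Y * fps_const x) B) = prod_list (map (\<lambda>l. 1 - Y * fps_const l) ls)) \<and>
    (\<forall>m. mtrace (B ^\<^sub>m m) = sum_list (map (\<lambda>l. l ^ m) ls))"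
proof -
  obtain ls where cp: "char_poly B = (\<Prod>a\<leftarrow>ls. [:- a, 1:])" and len: "length ls = n"
    using char_poly_factorized[OF B] by blast
  obtain T P Q where sd: "schur_decomposition B ls = (T,P,Q)" by (cases "schur_decomposition B ls") auto
  from schur_decomposition[OF B cp sd]
  have sw: "similar_mat_wit B T P Q" and uT: "upper_triangular T" and dT: "diag_mat T = ls" by auto
  from sw B have T: "T \<in> carrier_mat n n" and P: "P \<in> carrier_mat n n" and Q: "Q \<in> carrier_mat n n"
    and PQ: "P * Q = 1\<^sub>m n" and QP: "Q * P = 1\<^sub>m n" and BPTQ: "B = P * T * Q"
    unfolding similar_mat_wit_def Let_def by auto
  have dTi: "\<And>i. i < n \<Longrightarrow> T $$ (i,i) = ls ! i" using dT T unfolding diag_mat_def by auto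
  have ls_map: "ls = map (\<lambda>i. T $$ (i,i)) [0..<n]" using dT T unfolding diag_mat_def by auto
  have DET: "det (1\<^sub>m n - map_mat (\<lambda>x. Y * fps_const x) B) = prod_list (map (\<lambda>l. 1 - Y * fps_const l) ls)" for Y
  proof -
    let ?h = "map_mat (fps_const :: complex \<Rightarrow> complex fps)"
    have hP: "?h P \<in> carrier_mat n n" and hQ: "?h Q \<in> carrier_mat n n" and hT: "?h T \<in> carrier_mat n n"
      using P Q T by auto
    have hPQ: "?h P * ?h Q = 1\<^sub>m n"
      using fpsc.mat_hom_mult[OF P Q] PQ fpsc.mat_hom_one by simp
    have hB: "?h B = ?h P * ?h T * ?h Q"
      using BPTQ fpsc.mat_hom_mult P T Q by (metis mult_carrier_mat)
    have e1: "map_mat (\<lambda>x. Y * fps_const x) B = Y \<cdot>\<^sub>m ?h B"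
      by (rule eq_matI) auto
    have "1\<^sub>m n - map_mat (\<lambda>x. Y * fps_const x) B = ?h P * (1\<^sub>m n - Y \<cdot>\<^sub>m ?h T) * ?h Q"
    proof -
      have "?h P * (1\<^sub>m n - Y \<cdot>\<^sub>m ?h T) = ?h P - Y \<cdot>\<^sub>m (?h P * ?h T)"
      proof -
        have "?h P * (1\<^sub>m n - Y \<cdot>\<^sub>m ?h T) = ?h P * 1\<^sub>m n - ?h P * (Y \<cdot>\<^sub>m ?h T)"
          by (rule mult_minus_distrib_mat[OF hP]) (use hT in auto)
        also have "\<dots> = ?h P - Y \<cdot>\<^sub>m (?h P * ?h T)"
          using hP hT mult_smult_distrib[OF hP hT] by simp
        finally show ?thesis .
      qed
      then have "?h P * (1\<^sub>m n - Y \<cdot>\<^sub>m ?h T) * ?h Q = (?h P - Y \<cdot>\<^sub>m (?h P * ?h T)) * ?h Q" by simp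
      also have "\<dots> = ?h P * ?h Q - (Y \<cdot>\<^sub>m (?h P * ?h T)) * ?h Q"
        by (rule minus_mult_distrib_mat[OF hP _ hQ]) (use hP hT in auto)
      also have "\<dots> = 1\<^sub>m n - Y \<cdot>\<^sub>m (?h P * ?h T * ?h Q)"
        unfolding hPQ mult_smult_assoc_mat[OF mult_carrier_mat[OF hP hT] hQ] ..
      also have "\<dots> = 1\<^sub>m n - Y \<cdot>\<^sub>m ?h B"
        unfolding hB ..
      finally show ?thesis using e1 by simp
    qed
    then have "det (1\<^sub>m n - map_mat (\<lambda>x. Y * fps_const x) B) = det (?h P) * det (1\<^sub>m n - Y \<cdot>\<^sub>m ?h T) * det (?h Q)"
    proof -
      have M: "1\<^sub>m n - Y \<cdot>\<^sub>m ?h T \<in> carrier_mat n n"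
        by (rule minus_carrier_mat) (use T in auto)
      show ?thesis unfolding \<open>1\<^sub>m n - map_mat (\<lambda>x. Y * fps_const x) B = ?h P * (1\<^sub>m n - Y \<cdot>\<^sub>m ?h T) * ?h Q\<close>
        det_mult[OF mult_carrier_mat[OF hP M] hQ] det_mult[OF hP M] ..
    qed
    also have "det (?h P) * det (1\<^sub>m n - Y \<cdot>\<^sub>m ?h T) * det (?h Q) = det (1\<^sub>m n - Y \<cdot>\<^sub>m ?h T) * det (?h P * ?h Q)"
      unfolding det_mult[OF hP hQ] by (simp add: ac_simps)
    also have "\<dots> = det (1\<^sub>m n - Y \<cdot>\<^sub>m ?h T)" using hPQ by simp
    also have "\<dots> = prod_list (diag_mat (1\<^sub>m n - Y \<cdot>\<^sub>m ?h T))"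
    proof (rule det_upper_triangular)
      show "upper_triangular (1\<^sub>m n - Y \<cdot>\<^sub>m ?h T)"
        using uT T by (auto simp: upper_triangular_def)
    qed (use hT in auto)
    also have "diag_mat (1\<^sub>m n - Y \<cdot>\<^sub>m ?h T) = map (\<lambda>l. 1 - Y * fps_const l) ls"
      using T unfolding ls_map diag_mat_def by auto
    finally show ?thesis .
  qed
  have TR: "mtrace (B ^\<^sub>m m) = sum_list (map (\<lambda>l. l ^ m) ls)" for m
  proof -
    have Tm: "T ^\<^sub>m m \<in> carrier_mat n n" using T by simp
    have "B ^\<^sub>m m = P * T ^\<^sub>m m * Q" using similar_mat_wit_pow_id[OF sw] .
    then have "mtrace (B ^\<^sub>m m) = mtrace (P * (T ^\<^sub>m m * Q))" using P Tm Q by (simp add: assoc_mult_mat)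
    also have "\<dots> = mtrace ((T ^\<^sub>m m * Q) * P)" using P Tm Q by (intro mtrace_mult_comm) auto
    also have "\<dots> = mtrace (T ^\<^sub>m m)" using P Tm Q QP by (simp add: assoc_mult_mat right_mult_one_mat[OF Tm])
    also have "\<dots> = (\<Sum>i<n. T $$ (i,i) ^ m)"
      using upper_tri_pow[OF T uT, of m] Tm T unfolding mtrace_def by simp
    also have "\<dots> = sum_list (map (\<lambda>l. l ^ m) ls)"
      unfolding ls_map by (simp add: sum_list_sum_nth atLeast0LessThan)
    finally show ?thesis .
  qed
  show ?thesis using len DET TR by blast
qed


lemma mult_entry:
  assumes "A \<in> carrier_mat a b" "B \<in> carrier_mat b c" "i < a" "j < c"
  shows "(A * B) $$ (i,j) = (\<Sum>k<b. A $$ (i,k) * B $$ (k,j))"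
  using assms by (simp add: scalar_prod_def atLeast0LessThan)

lemma pow_mat_Suc_left:
  assumes A: "A \<in> carrier_mat n n"
  shows "A ^\<^sub>m Suc k = A * A ^\<^sub>m k"
proof (induction k)
  case 0 then show ?case using A by simp
next
  case (Suc k)
  have "A ^\<^sub>m Suc (Suc k) = (A * A ^\<^sub>m k) * A" using Suc by simp
  also have "\<dots> = A * (A ^\<^sub>m k * A)" using A by (simp add: assoc_mult_mat[of _ n n _ n _ n])
  finally show ?case by simp
qed

lemma set_block_index: "set (block_index r es) = {(e,j). e \<in> set es \<and> j < r e}"
  unfolding block_index_def by auto

lemma distinct_block_index: "distinct es \<Longrightarrow> distinct (block_index r es)"
  unfolding block_index_def
  by (induction es) (auto simp: distinct_map inj_on_def)

lemma sum_block_index: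
  assumes "distinct es"
  shows "(\<Sum>z<length (block_index r es). g (block_index r es ! z)) = (\<Sum>e\<in>set es. \<Sum>j<r e. g (e,j))"
proof -
  let ?ix = "block_index r es"
  have "(\<Sum>z<length ?ix. g (?ix ! z)) = sum_list (map g ?ix)"
    by (simp add: sum_list_sum_nth atLeast0LessThan)
  also have "\<dots> = sum g (set ?ix)"
    using distinct_block_index[OF assms] by (simp add: sum_list_distinct_conv_sum_set)
  also have "set ?ix = Sigma (set es) (\<lambda>e. {..<r e})" unfolding set_block_index by auto
  also have "sum g (Sigma (set es) (\<lambda>e. {..<r e})) = (\<Sum>e\<in>set es. \<Sum>j<r e. g (e,j))"
    by (subst sum.Sigma) auto
  finally show ?thesis .
qed

lemma M_mat_carrier: "M_mat r u es \<in> carrier_mat (length (block_index r es)) (length (block_index r es))"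
  unfolding M_mat_def Let_def by simp

lemma M_mat_entry:
  assumes "a < length (block_index r es)" "b < length (block_index r es)"
  shows "M_mat r u es $$ (a,b) = (let ix = block_index r es in
     if feeds (fst (ix ! b)) (fst (ix ! a)) then u (fst (ix ! b)) (fst (ix ! a)) $$ (snd (ix ! a), snd (ix ! b)) else 0)"
  using assms unfolding M_mat_def Let_def by simp


primrec Qw :: "'v dedge set \<Rightarrow> ('v dedge \<Rightarrow> nat) \<Rightarrow> ('v dedge \<Rightarrow> 'v dedge \<Rightarrow> complex mat)
   \<Rightarrow> nat \<Rightarrow> 'v dedge \<Rightarrow> 'v dedge \<Rightarrow> nat \<Rightarrow> nat \<Rightarrow> complex" where
  "Qw D r u 0 e e' i j = (if e = e' \<and> i = j then 1 else 0)"
| "Qw D r u (Suc n) e e' i j = (\<Sum>f\<in>{f\<in>D. feeds f e}. \<Sum>k<r f. u f e $$ (i,k) * Qw D r u n f e' k j)"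

definition Wk :: "'v dedge set \<Rightarrow> nat \<Rightarrow> 'v dedge \<Rightarrow> 'v dedge \<Rightarrow> 'v dedge list set" where
  "Wk D n e' e = {v. length v = Suc n \<and> set v \<subseteq> D \<and> v ! 0 = e' \<and> v ! n = e \<and> (\<forall>l<n. feeds (v ! l) (v ! Suc l))}"

primrec pw :: "('v dedge \<Rightarrow> nat) \<Rightarrow> ('v dedge \<Rightarrow> 'v dedge \<Rightarrow> complex mat) \<Rightarrow> 'v dedge list \<Rightarrow> nat \<Rightarrow> complex mat" where
  "pw r u v 0 = 1\<^sub>m (r (v ! 0))"
| "pw r u v (Suc l) = u (v ! l) (v ! Suc l) * pw r u v l"

lemma pw_append: "l < length v \<Longrightarrow> pw r u (v @ w) l = pw r u v l"
  by (induction l) (auto simp: nth_append)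

lemma finite_Wk: "finite D \<Longrightarrow> finite (Wk D n e' e)"
proof -
  assume "finite D"
  then have "finite {v. set v \<subseteq> D \<and> length v = Suc n}" by (rule finite_lists_length_eq)
  then show ?thesis by (rule rev_finite_subset) (auto simp: Wk_def)
qed

locale hgr =
  fixes D :: "'v dedge set" and r :: "'v dedge \<Rightarrow> nat" and u :: "'v dedge \<Rightarrow> 'v dedge \<Rightarrow> complex mat"
  assumes finD: "finite D"
    and Ucar: "\<And>e e'. e \<in> D \<Longrightarrow> e' \<in> D \<Longrightarrow> feeds e' e \<Longrightarrow> u e' e \<in> carrier_mat (r e) (r e')"
begin

lemma pw_carrier:
  assumes "set v \<subseteq> D" "l < length v" "\<forall>l'<l. feeds (v ! l') (v ! Suc l')"
  shows "pw r u v l \<in> carrier_mat (r (v ! l)) (r (v ! 0))"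
  using assms
proof (induction l)
  case 0 then show ?case by simp
next
  case (Suc l)
  have "v ! l \<in> D" "v ! Suc l \<in> D" using Suc.prems by auto
  then have "u (v ! l) (v ! Suc l) \<in> carrier_mat (r (v ! Suc l)) (r (v ! l))"
    using Ucar Suc.prems by auto
  moreover have "pw r u v l \<in> carrier_mat (r (v ! l)) (r (v ! 0))" using Suc by auto
  ultimately show ?case by simp
qed

lemma Qwalk:
  assumes "e \<in> D" "e' \<in> D" "i < r e" "j < r e'"
  shows "Qw D r u n e e' i j = (\<Sum>v\<in>Wk D n e' e. pw r u v n $$ (i,j))"
  using assms
proof (induction n arbitrary: e i)
  case 0
  show ?case
  proof (cases "e = e'")
    case True
    have "Wk D 0 e' e = {[e']}" using True 0 
      by (auto simp: Wk_def length_Suc_conv)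
    then show ?thesis using True 0 by simp
  next
    case False
    have "Wk D 0 e' e = {}" using False by (auto simp: Wk_def)
    then show ?thesis using False by simp
  qed
next
  case (Suc n)
  let ?S = "{f\<in>D. feeds f e}"
  have "Qw D r u (Suc n) e e' i j = (\<Sum>f\<in>?S. \<Sum>k<r f. u f e $$ (i,k) * (\<Sum>v\<in>Wk D n e' f. pw r u v n $$ (k,j)))"
    using Suc by simp
  also have "\<dots> = (\<Sum>f\<in>?S. \<Sum>v\<in>Wk D n e' f. \<Sum>k<r f. u f e $$ (i,k) * pw r u v n $$ (k,j))"
    by (simp add: sum_distrib_left sum.swap[of _ "{..<_}"])
  also have "\<dots> = (\<Sum>f\<in>?S. \<Sum>v\<in>Wk D n e' f. pw r u (v @ [e]) (Suc n) $$ (i,j))"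
  proof (intro sum.cong refl)
    fix f v assume f: "f \<in> ?S" and v: "v \<in> Wk D n e' f"
    have vD: "set v \<subseteq> D" and lv: "length v = Suc n" and v0: "v ! 0 = e'" and vn: "v ! n = f"
      and ch: "\<forall>l<n. feeds (v ! l) (v ! Suc l)" using v by (auto simp: Wk_def)
    have pc: "pw r u v n \<in> carrier_mat (r f) (r e')" using pw_carrier[OF vD _ ch] lv vn v0 by simp
    have uc: "u f e \<in> carrier_mat (r e) (r f)" using Ucar f Suc.prems by auto
    have "pw r u (v @ [e]) (Suc n) = u f e * pw r u v n"
      using lv vn pw_append[of n v r u "[e]"] by (simp add: nth_append)
    then show "(\<Sum>k<r f. u f e $$ (i,k) * pw r u v n $$ (k,j)) = pw r u (v @ [e]) (Suc n) $$ (i,j)"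
      using mult_entry[OF uc pc Suc.prems(3,4)] by simp
  qed
  also have "\<dots> = (\<Sum>(f,v)\<in>Sigma ?S (\<lambda>f. Wk D n e' f). pw r u (v @ [e]) (Suc n) $$ (i,j))"
    by (rule sum.Sigma) (use finD finite_Wk[OF finD] in auto)
  also have "\<dots> = (\<Sum>v\<in>Wk D (Suc n) e' e. pw r u v (Suc n) $$ (i,j))"
  proof -
    have bij: "bij_betw (\<lambda>(f,v). v @ [e]) (Sigma ?S (\<lambda>f. Wk D n e' f)) (Wk D (Suc n) e' e)"
    proof (rule bij_betwI')
      fix x y assume x: "x \<in> Sigma ?S (\<lambda>f. Wk D n e' f)" and y: "y \<in> Sigma ?S (\<lambda>f. Wk D n e' f)"
      obtain f v where xv: "x = (f,v)" by fastforce
      obtain g w where yw: "y = (g,w)" by fastforce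
      show "((\<lambda>(f,v). v @ [e]) x = (\<lambda>(f,v). v @ [e]) y) = (x = y)"
        using x y unfolding xv yw by (auto simp: Wk_def)
    next
      fix x assume x: "x \<in> Sigma ?S (\<lambda>f. Wk D n e' f)"
      obtain f v where xv: "x = (f,v)" by fastforce
      have vD: "set v \<subseteq> D" and lv: "length v = Suc n" and v0: "v ! 0 = e'" and vn: "v ! n = f"
        and ch: "\<forall>l<n. feeds (v ! l) (v ! Suc l)" and fe: "feeds f e" using x xv by (auto simp: Wk_def)
      have ch2: "\<forall>l<Suc n. feeds ((v @ [e]) ! l) ((v @ [e]) ! Suc l)"
      proof (intro allI impI)
        fix l assume l: "l < Suc n"
        show "feeds ((v @ [e]) ! l) ((v @ [e]) ! Suc l)"
        proof (cases "l < n")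
          case True then show ?thesis using ch lv by (simp add: nth_append)
        next
          case False then have "l = n" using l by simp
          then show ?thesis using fe lv vn by (simp add: nth_append)
        qed
      qed
      show "(\<lambda>(f,v). v @ [e]) x \<in> Wk D (Suc n) e' e"
        using xv vD lv v0 ch2 Suc.prems by (auto simp: Wk_def nth_append)
    next
      fix w assume w: "w \<in> Wk D (Suc n) e' e"
      have wD: "set w \<subseteq> D" and lw: "length w = Suc (Suc n)" and w0: "w ! 0 = e'" and wn: "w ! Suc n = e"
        and ch: "\<forall>l<Suc n. feeds (w ! l) (w ! Suc l)" using w by (auto simp: Wk_def)
      define v where "v = butlast w"
      have wv: "w = v @ [e]"
        using lw wn unfolding v_def
        by (metis append_butlast_last_id diff_Suc_1 last_conv_nth list.size(3) nat.distinct(1))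
      have lv: "length v = Suc n" using lw v_def by simp
      have vnth: "\<And>l. l < Suc n \<Longrightarrow> v ! l = w ! l" using wv lv by (simp add: nth_append)
      have wnD: "w ! n \<in> D" using wD lw by (metis less_Suc_eq nth_mem subset_iff)
      have fe: "feeds (w ! n) e" using ch wn by auto
      have vD: "set v \<subseteq> D" using wD v_def by (meson in_set_butlastD subset_iff)
      have "v \<in> Wk D n e' (w ! n)" unfolding Wk_def using lv vD vnth w0 ch by auto
      then have "(w ! n, v) \<in> Sigma ?S (\<lambda>f. Wk D n e' f)" using wnD fe by auto
      then show "\<exists>x\<in>Sigma ?S (\<lambda>f. Wk D n e' f). w = (\<lambda>(f,v). v @ [e]) x"
        using wv by (intro bexI[where x="(w ! n, v)"]) auto
    qed
    show ?thesis using sum.reindex_bij_betw[OF bij, of "\<lambda>v. pw r u v (Suc n) $$ (i,j)"]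
      by (simp add: split_beta)
  qed
  finally show ?case .
qed

end


locale hg = hgr "dedges F" r u for F :: "'v set set" and r u +
  fixes es :: "'v dedge list"
  assumes dist: "distinct es" and ses: "set es = dedges F"
begin

abbreviation "A \<equiv> M_mat r u es"
abbreviation "ix \<equiv> block_index r es"
abbreviation "N \<equiv> length (block_index r es)"

lemma ix_mem: "x < N \<Longrightarrow> fst (ix ! x) \<in> dedges F \<and> snd (ix ! x) < r (fst (ix ! x))"
  using nth_mem[of x ix] set_block_index[of r es] ses by auto

lemma pow_entry:
  "x < N \<Longrightarrow> y < N \<Longrightarrow> (A ^\<^sub>m n) $$ (x,y) = Qw (dedges F) r u n (fst (ix ! x)) (fst (ix ! y)) (snd (ix ! x)) (snd (ix ! y))"
proof (induction n arbitrary: x)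
  case 0
  have "(x = y) = (ix ! x = ix ! y)" using 0 distinct_block_index[OF dist] nth_eq_iff_index_eq by metis
  then have eq: "(x = y) = (fst (ix ! x) = fst (ix ! y) \<and> snd (ix ! x) = snd (ix ! y))"
    by (simp add: prod_eq_iff)
  have dr: "dim_row A = N" using M_mat_carrier[of r u es] by simp
  show ?case using 0 dr by (simp only: pow_mat.simps index_one_mat(1) Qw.simps eq)
next
  case (Suc n)
  have Ac: "A \<in> carrier_mat N N" by (rule M_mat_carrier)
  have Pc: "A ^\<^sub>m n \<in> carrier_mat N N" using Ac by simp
  let ?ex = "fst (ix ! x)" and ?jx = "snd (ix ! x)" and ?ey = "fst (ix ! y)" and ?jy = "snd (ix ! y)"
  define G where "G = (\<lambda>(f,k). (if feeds f ?ex then u f ?ex $$ (?jx, k) else 0) * Qw (dedges F) r u n f ?ey k ?jy)"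
  have "(A ^\<^sub>m Suc n) $$ (x,y) = (A * A ^\<^sub>m n) $$ (x,y)" using pow_mat_Suc_left[OF Ac] by simp
  also have "\<dots> = (\<Sum>z<N. A $$ (x,z) * (A ^\<^sub>m n) $$ (z,y))" using mult_entry[OF Ac Pc Suc.prems] .
  also have "\<dots> = (\<Sum>z<N. G (ix ! z))"
    using Suc by (intro sum.cong refl) (auto simp: G_def M_mat_entry Let_def split: prod.splits)
  also have "\<dots> = (\<Sum>e\<in>dedges F. \<Sum>j<r e. G (e,j))" using sum_block_index[OF dist] ses by simp
  also have "\<dots> = (\<Sum>e\<in>dedges F. if feeds e ?ex then (\<Sum>j<r e. u e ?ex $$ (?jx, j) * Qw (dedges F) r u n e ?ey j ?jy) else 0)"
    by (intro sum.cong refl) (auto simp: G_def)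
  also have "\<dots> = Qw (dedges F) r u (Suc n) ?ex ?ey ?jx ?jy"
    by (simp add: sum.inter_filter[OF finD, symmetric])
  finally show ?case .
qed

lemma trace_pow_walks:
  "mtrace (A ^\<^sub>m n) = (\<Sum>e\<in>dedges F. \<Sum>v\<in>Wk (dedges F) n e e. mtrace (pw r u v n))"
proof -
  have Ac: "A \<in> carrier_mat N N" by (rule M_mat_carrier)
  have "mtrace (A ^\<^sub>m n) = (\<Sum>x<N. (A ^\<^sub>m n) $$ (x,x))" using Ac by (simp add: mtrace_def)
  also have "\<dots> = (\<Sum>x<N. (\<lambda>(e,j). Qw (dedges F) r u n e e j j) (ix ! x))"
    by (intro sum.cong refl) (auto simp: pow_entry split: prod.splits)
  also have "\<dots> = (\<Sum>e\<in>dedges F. \<Sum>j<r e. Qw (dedges F) r u n e e j j)"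
    using sum_block_index[OF dist, of "\<lambda>(e,j). Qw (dedges F) r u n e e j j" r] ses by simp
  also have "\<dots> = (\<Sum>e\<in>dedges F. \<Sum>j<r e. \<Sum>v\<in>Wk (dedges F) n e e. pw r u v n $$ (j,j))"
    by (intro sum.cong refl) (simp add: Qwalk)
  also have "\<dots> = (\<Sum>e\<in>dedges F. \<Sum>v\<in>Wk (dedges F) n e e. mtrace (pw r u v n))"
  proof (intro sum.cong refl)
    fix e assume e: "e \<in> dedges F"
    have "(\<Sum>j<r e. \<Sum>v\<in>Wk (dedges F) n e e. pw r u v n $$ (j,j)) = (\<Sum>v\<in>Wk (dedges F) n e e. \<Sum>j<r e. pw r u v n $$ (j,j))"
      by (rule sum.swap)
    also have "\<dots> = (\<Sum>v\<in>Wk (dedges F) n e e. mtrace (pw r u v n))"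
    proof (intro sum.cong refl)
      fix v assume v: "v \<in> Wk (dedges F) n e e"
      then have "pw r u v n \<in> carrier_mat (r e) (r e)"
        using pw_carrier[of v n] by (auto simp: Wk_def)
      then show "(\<Sum>j<r e. pw r u v n $$ (j,j)) = mtrace (pw r u v n)" by (simp add: mtrace_def)
    qed
    finally show "(\<Sum>j<r e. \<Sum>v\<in>Wk (dedges F) n e e. pw r u v n $$ (j,j)) = (\<Sum>v\<in>Wk (dedges F) n e e. mtrace (pw r u v n))" .
  qed
  finally show ?thesis .
qed

lemma pw_pi_aux:
  assumes "c \<noteq> []" "l \<le> length c"
  shows "pw r u (c @ [hd c]) l = pi_aux r u c l"
  using assms
proof (induction l)
  case 0 then show ?case by (simp add: nth_append hd_conv_nth)
next
  case (Suc l)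
  have l: "l < length c" using Suc by simp
  have "(c @ [hd c]) ! Suc l = c ! (Suc l mod length c)"
  proof (cases "Suc l < length c")
    case True then show ?thesis by (simp add: nth_append)
  next
    case False then have "Suc l = length c" using l by simp
    then show ?thesis using Suc.prems by (simp add: nth_append hd_conv_nth)
  qed
  then show ?case using Suc l by (simp add: nth_append)
qed

definition CG :: "nat \<Rightarrow> 'v dedge list set" where
  "CG n = {c. closed_geodesic F c \<and> length c = n}"

lemma trace_pow_CG:
  assumes n: "n \<ge> 1"
  shows "mtrace (A ^\<^sub>m n) = (\<Sum>c\<in>CG n. mtrace (pi_mat r u c))"
proof -
  have "(\<Sum>e\<in>dedges F. \<Sum>v\<in>Wk (dedges F) n e e. mtrace (pw r u v n))
      = (\<Sum>(e,v)\<in>Sigma (dedges F) (\<lambda>e. Wk (dedges F) n e e). mtrace (pw r u v n))"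
    by (rule sum.Sigma) (use finD finite_Wk[OF finD] in auto)
  also have "\<dots> = (\<Sum>c\<in>CG n. mtrace (pi_mat r u c))"
  proof -
    have bij: "bij_betw (\<lambda>c. (hd c, c @ [hd c])) (CG n) (Sigma (dedges F) (\<lambda>e. Wk (dedges F) n e e))"
    proof (rule bij_betwI')
      fix c d assume "c \<in> CG n" "d \<in> CG n"
      show "((hd c, c @ [hd c]) = (hd d, d @ [hd d])) = (c = d)" by auto
    next
      fix c assume c: "c \<in> CG n"
      have cne: "c \<noteq> []" and cD: "set c \<subseteq> dedges F" and lc: "length c = n"
        and ch: "\<forall>l<length c. feeds (c ! l) (c ! (Suc l mod length c))"
        using c by (auto simp: CG_def closed_geodesic_def)
      have hdD: "hd c \<in> dedges F" using cne cD by auto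
      have chain: "\<forall>l<n. feeds ((c @ [hd c]) ! l) ((c @ [hd c]) ! Suc l)"
      proof (intro allI impI)
        fix l assume l: "l < n"
        have "(c @ [hd c]) ! Suc l = c ! (Suc l mod length c)"
        proof (cases "Suc l < length c")
          case True then show ?thesis by (simp add: nth_append)
        next
          case False then have "Suc l = length c" using l lc by simp
          then show ?thesis using cne by (simp add: nth_append hd_conv_nth)
        qed
        then show "feeds ((c @ [hd c]) ! l) ((c @ [hd c]) ! Suc l)" using ch l lc by (simp add: nth_append)
      qed
      show "(hd c, c @ [hd c]) \<in> Sigma (dedges F) (\<lambda>e. Wk (dedges F) n e e)"
        using hdD cD lc chain cne by (auto simp: Wk_def nth_append hd_conv_nth)
    next
      fix x assume x: "x \<in> Sigma (dedges F) (\<lambda>e. Wk (dedges F) n e e)"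
      obtain e w where xw: "x = (e,w)" by fastforce
      have wD: "set w \<subseteq> dedges F" and lw: "length w = Suc n" and w0: "w ! 0 = e" and wn: "w ! n = e"
        and ch: "\<forall>l<n. feeds (w ! l) (w ! Suc l)" using x xw by (auto simp: Wk_def)
      define c where "c = butlast w"
      have lc: "length c = n" using lw c_def by simp
      have cne: "c \<noteq> []" using lc n by auto
      have cnth: "\<And>l. l < n \<Longrightarrow> c ! l = w ! l" using c_def lw by (simp add: nth_butlast)
      have hc: "hd c = e" using cne cnth[of 0] n w0 by (simp add: hd_conv_nth)
      have wc: "w = c @ [hd c]"
        using lw wn hc unfolding c_def
        by (metis append_butlast_last_id diff_Suc_1 last_conv_nth list.size(3) nat.distinct(1))
      have cD: "set c \<subseteq> dedges F" using wD c_def by (meson in_set_butlastD subset_iff)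
      have "\<forall>l<length c. feeds (c ! l) (c ! (Suc l mod length c))"
      proof (intro allI impI)
        fix l assume l: "l < length c"
        have "c ! (Suc l mod length c) = w ! Suc l"
        proof (cases "Suc l < length c")
          case True then show ?thesis using cnth lc by simp
        next
          case False then have "Suc l = n" using l lc by simp
          then show ?thesis using wn cnth[of 0] n w0 lc by simp
        qed
        then show "feeds (c ! l) (c ! (Suc l mod length c))" using ch l lc cnth by simp
      qed
      then have "c \<in> CG n" using cne cD lc by (simp add: CG_def closed_geodesic_def)
      then show "\<exists>c\<in>CG n. x = (hd c, c @ [hd c])" using xw wc hc by auto
    qed
    have "(\<Sum>c\<in>CG n. mtrace (pi_mat r u c)) = (\<Sum>c\<in>CG n. (\<lambda>(e,v). mtrace (pw r u v n)) (hd c, c @ [hd c]))"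
    proof (intro sum.cong refl)
      fix c assume c: "c \<in> CG n"
      then have "c \<noteq> []" "length c = n" by (auto simp: CG_def closed_geodesic_def)
      then show "mtrace (pi_mat r u c) = (\<lambda>(e,v). mtrace (pw r u v n)) (hd c, c @ [hd c])"
        using pw_pi_aux[of c n] by (simp add: pi_mat_def)
    qed
    also have "\<dots> = (\<Sum>(e,v)\<in>Sigma (dedges F) (\<lambda>e. Wk (dedges F) n e e). mtrace (pw r u v n))"
      using sum.reindex_bij_betw[OF bij, of "\<lambda>(e,v). mtrace (pw r u v n)"] by simp
    finally show ?thesis by simp
  qed
  finally show ?thesis using trace_pow_walks by simp
qed

end


definition per :: "'a list \<Rightarrow> nat" where
  "per c = (LEAST k. 0 < k \<and> rotate k c = c)"

lemma rotate_inj: "rotate k x = rotate k y \<Longrightarrow> x = y"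
proof (induction k)
  case 0 then show ?case by simp
next
  case (Suc k)
  have "rotate k x = rotate k y" using injD[OF inj_rotate1] Suc.prems by simp
  then show ?case by (rule Suc.IH)
qed

lemma rot_mult: "rotate k c = c \<Longrightarrow> rotate (j * k) c = c"
proof (induction j)
  case 0 then show ?case by simp
next
  case (Suc j)
  have "rotate (Suc j * k) c = rotate k (rotate (j * k) c)" by (simp add: rotate_rotate add.commute)
  then show ?case using Suc by simp
qed

lemma per_basic:
  assumes "c \<noteq> []"
  shows "0 < per c \<and> rotate (per c) c = c \<and> per c \<le> length c"
proof -
  have ex: "0 < length c \<and> rotate (length c) c = c" using assms by simp
  have "0 < per c \<and> rotate (per c) c = c" unfolding per_def by (rule LeastI[of _ "length c"]) (rule ex)
  moreover have "per c \<le> length c" unfolding per_def by (rule Least_le) (rule ex)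
  ultimately show ?thesis by simp
qed

lemma per_dvd:
  assumes "c \<noteq> []" "rotate k c = c"
  shows "per c dvd k"
proof -
  let ?p = "per c"
  have p: "0 < ?p" "rotate ?p c = c" using per_basic[OF assms(1)] by auto
  have "rotate (k div ?p * ?p) c = c" using rot_mult[OF p(2)] .
  then have "rotate (k mod ?p) c = rotate (k mod ?p) (rotate (k div ?p * ?p) c)" by simp
  also have "\<dots> = rotate k c" by (simp add: rotate_rotate)
  finally have r: "rotate (k mod ?p) c = c" using assms(2) by simp
  show ?thesis
  proof (rule ccontr)
    assume "\<not> ?p dvd k"
    then have "0 < k mod ?p" by (simp add: dvd_eq_mod_eq_0)
    then have "?p \<le> k mod ?p" using Least_le[of "\<lambda>k. 0 < k \<and> rotate k c = c", folded per_def] r by blast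
    moreover have "k mod ?p < ?p" using p by simp
    ultimately show False by simp
  qed
qed

lemma per_dvd_iff:
  assumes "c \<noteq> []"
  shows "rotate k c = c \<longleftrightarrow> per c dvd k"
proof
  assume "per c dvd k"
  then obtain j where "k = j * per c" by (auto simp: dvd_def mult.commute)
  then show "rotate k c = c" using rot_mult per_basic[OF assms] by metis
qed (rule per_dvd[OF assms])

lemma rot_nth_shift:
  assumes "rotate t c = c" "i < length c"
  shows "c ! ((j * t + i) mod length c) = c ! i"
proof -
  have "rotate (j * t) c = c" using rot_mult[OF assms(1)] .
  then have "rotate (j * t) c ! i = c ! i" by simp
  then show ?thesis using nth_rotate[OF assms(2)] by simp
qed

lemma per_nth:
  assumes "c \<noteq> []" "i < length c"
  shows "c ! i = c ! (i mod per c)"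
proof -
  let ?p = "per c"
  have p: "0 < ?p" "rotate ?p c = c" "?p \<le> length c" using per_basic[OF assms(1)] by auto
  have lt: "i mod ?p < length c" using p by (meson less_le_trans mod_less_divisor)
  have "c ! (((i div ?p) * ?p + i mod ?p) mod length c) = c ! (i mod ?p)"
    by (rule rot_nth_shift[OF p(2) lt])
  moreover have "(i div ?p) * ?p + i mod ?p = i" by simp
  ultimately show ?thesis using assms by simp
qed

lemma rot_of_nth:
  assumes "0 < t" "t dvd length c" "\<forall>i<length c. c ! i = c ! (i mod t)"
  shows "rotate t c = c"
proof (rule nth_equalityI)
  show "length (rotate t c) = length c" by simp
  fix i assume i: "i < length (rotate t c)"
  then have i': "i < length c" by simp
  have "rotate t c ! i = c ! ((t + i) mod length c)" using nth_rotate[OF i'] .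
  also have "\<dots> = c ! ((t + i) mod length c mod t)"
    using assms(3) i' by (metis length_greater_0_conv list.size(3) mod_less_divisor not_less0)
  also have "(t + i) mod length c mod t = i mod t" using assms(2) by (simp add: mod_mod_cancel)
  also have "c ! (i mod t) = c ! i" using assms(3) i' by simp
  finally show "rotate t c ! i = c ! i" .
qed

lemma concat_rep_length: "length (concat (replicate m d)) = m * length d"
  by (induction m) auto

lemma concat_rep_nth: "i < m * length d \<Longrightarrow> concat (replicate m d) ! i = d ! (i mod length d)"
proof (induction m arbitrary: i)
  case 0 then show ?case by simp
next
  case (Suc m)
  show ?case
  proof (cases "i < length d")
    case True then show ?thesis by (simp add: nth_append)
  next
    case False
    then have "i - length d < m * length d" using Suc.prems by simp
    then have "concat (replicate m d) ! (i - length d) = d ! ((i - length d) mod length d)" by (rule Suc.IH)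
    moreover have "(i - length d) mod length d = i mod length d" using False by (simp add: mod_if)
    ultimately show ?thesis using False by (simp add: nth_append concat_rep_length)
  qed
qed

lemma eq_concat_rep:
  assumes "length c = m * length d" "\<forall>i<length c. c ! i = d ! (i mod length d)"
  shows "c = concat (replicate m d)"
proof (rule nth_equalityI)
  show "length c = length (concat (replicate m d))" using assms(1) concat_rep_length by metis
  fix i assume "i < length c"
  then show "c ! i = concat (replicate m d) ! i" using assms concat_rep_nth by metis
qed

lemma nonprim_iff:
  assumes "c \<noteq> []"
  shows "(\<exists>d m. m \<ge> 2 \<and> c = concat (replicate m d)) \<longleftrightarrow> per c < length c"
proof
  assume "\<exists>d m. m \<ge> 2 \<and> c = concat (replicate m d)"
  then obtain d m where m: "m \<ge> 2" and c: "c = concat (replicate m d)" by blast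
  have lc: "length c = m * length d" using c concat_rep_length by simp
  have dne: "0 < length d" using assms lc by (cases "length d") auto
  have cn: "\<forall>i<length c. c ! i = c ! (i mod length d)"
  proof (intro allI impI)
    fix i assume i: "i < length c"
    have i2: "i mod length d < length c" using i mod_less_eq_dividend[of i "length d"] by linarith
    have "c ! i = d ! (i mod length d)" using concat_rep_nth[of i m d] i lc c by simp
    moreover have "c ! (i mod length d) = d ! (i mod length d mod length d)"
      using concat_rep_nth[of "i mod length d" m d] i2 lc c by simp
    ultimately show "c ! i = c ! (i mod length d)" by simp
  qed
  have "rotate (length d) c = c" by (rule rot_of_nth[OF dne _ cn]) (simp add: lc)
  then have "per c dvd length d" by (rule per_dvd[OF assms])
  then have "per c \<le> length d" using dne by (simp add: dvd_imp_le)
  also have "length d < length c" using lc m dne by simp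
  finally show "per c < length c" .
next
  assume lt: "per c < length c"
  let ?p = "per c"
  have p: "0 < ?p" "rotate ?p c = c" using per_basic[OF assms] by auto
  have pd: "?p dvd length c" using per_dvd[OF assms] assms by simp
  obtain m where m: "length c = m * ?p" using pd by (auto simp: dvd_def mult.commute)
  have m2: "m \<ge> 2"
  proof (rule ccontr)
    assume "\<not> m \<ge> 2"
    then have "m = 0 \<or> m = 1" by auto
    then show False using m lt assms by auto
  qed
  have "c = concat (replicate m (take ?p c))"
  proof (rule eq_concat_rep)
    show "length c = m * length (take ?p c)" using m lt by simp
    show "\<forall>i<length c. c ! i = take ?p c ! (i mod length (take ?p c))"
      using per_nth[OF assms] lt p by simp
  qed
  then show "\<exists>d m. m \<ge> 2 \<and> c = concat (replicate m d)" using m2 by blast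
qed


lemma per_concat:
  assumes "d \<noteq> []" "per d = length d" "m \<ge> 1"
  shows "per (concat (replicate m d)) = length d"
proof -
  let ?c = "concat (replicate m d)"
  have lc: "length ?c = m * length d" by (rule concat_rep_length)
  have cne: "?c \<noteq> []" using assms lc by (metis length_0_conv mult_is_0 not_one_le_zero)
  have cn: "\<And>i. i < length ?c \<Longrightarrow> ?c ! i = d ! (i mod length d)" using concat_rep_nth lc by metis
  have rot: "rotate (length d) ?c = ?c"
  proof (rule rot_of_nth)
    show "0 < length d" using assms by simp
    show "length d dvd length ?c" using lc by simp
    show "\<forall>i<length ?c. ?c ! i = ?c ! (i mod length d)"
    proof (intro allI impI)
      fix i assume i: "i < length ?c"
      have i2: "i mod length d < length ?c" using i mod_less_eq_dividend[of i "length d"] by linarith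
      show "?c ! i = ?c ! (i mod length d)" using cn[OF i] cn[OF i2] by simp
    qed
  qed
  let ?p = "per ?c"
  have pd: "?p dvd length d" using per_dvd[OF cne rot] .
  have p0: "0 < ?p" using per_basic[OF cne] by simp
  have dl: "length d \<le> length ?c" using lc assms(3) by simp
  have "rotate ?p d = d"
  proof (rule rot_of_nth[OF p0 pd], intro allI impI)
    fix i assume i: "i < length d"
    have i2: "i mod ?p < length d" using i mod_less_eq_dividend[of i ?p] by linarith
    have "d ! i = ?c ! i" using cn[of i] i dl by simp
    also have "\<dots> = ?c ! (i mod ?p)" using per_nth[OF cne, of i] i dl by simp
    also have "\<dots> = d ! (i mod ?p)" using cn[of "i mod ?p"] i2 dl by simp
    finally show "d ! i = d ! (i mod ?p)" .
  qed
  then have "per d dvd ?p" using per_dvd[OF assms(1)] by simp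
  then have "length d \<le> ?p" using assms(2) p0 by (simp add: dvd_imp_le)
  moreover have "?p \<le> length d" using pd assms(1) by (simp add: dvd_imp_le)
  ultimately show ?thesis by simp
qed

lemma take_per_prim:
  assumes "c \<noteq> []"
  shows "per (take (per c) c) = per c" "length (take (per c) c) = per c"
proof -
  let ?p = "per c" and ?d = "take (per c) c"
  have p: "0 < ?p" "rotate ?p c = c" "?p \<le> length c" using per_basic[OF assms] by auto
  show ld: "length ?d = ?p" using p by simp
  have dne: "?d \<noteq> []" using ld p by auto
  let ?q = "per ?d"
  have q: "0 < ?q" "rotate ?q ?d = ?d" "?q \<le> length ?d" using per_basic[OF dne] by auto
  have qp: "?q dvd ?p" using per_dvd[OF dne, of "length ?d"] ld by simp
  have pn: "?p dvd length c" using per_dvd[OF assms, of "length c"] by simp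
  have "rotate ?q c = c"
  proof (rule rot_of_nth[OF q(1)])
    show "?q dvd length c" using qp pn by (rule dvd_trans)
    show "\<forall>i<length c. c ! i = c ! (i mod ?q)"
    proof (intro allI impI)
      fix i assume i: "i < length c"
      have imp: "i mod ?p < ?p" using p by simp
      have "i mod ?q < ?q" using q(1) by simp
      then have iq: "i mod ?q < ?p" using q(3) ld by linarith
      have "c ! i = c ! (i mod ?p)" using per_nth[OF assms i] .
      also have "\<dots> = ?d ! (i mod ?p)" using imp by simp
      also have "\<dots> = ?d ! (i mod ?p mod ?q)" using per_nth[OF dne, of "i mod ?p"] imp ld by simp
      also have "i mod ?p mod ?q = i mod ?q" using qp by (simp add: mod_mod_cancel)
      also have "?d ! (i mod ?q) = c ! (i mod ?q)" using iq by simp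
      finally show "c ! i = c ! (i mod ?q)" .
    qed
  qed
  then have "?p dvd ?q" using per_dvd[OF assms] by simp
  then show "?q = ?p" using qp by (simp add: dvd_antisym)
qed

lemma per_rotate: "per (rotate k c) = per c"
proof -
  have "\<And>j. rotate j (rotate k c) = rotate k c \<longleftrightarrow> rotate j c = c"
  proof -
    fix j
    have "rotate j (rotate k c) = rotate k (rotate j c)" by (simp add: rotate_rotate add.commute)
    then show "rotate j (rotate k c) = rotate k c \<longleftrightarrow> rotate j c = c" using rotate_inj by metis
  qed
  then show ?thesis unfolding per_def by simp
qed

lemma prime_geodesic_iff:
  "prime_geodesic F c \<longleftrightarrow> closed_geodesic F c \<and> per c = length c"
proof (cases "c = []")
  case True then show ?thesis by (simp add: prime_geodesic_def closed_geodesic_def)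
next
  case False
  then show ?thesis using nonprim_iff[OF False] per_basic[OF False]
    unfolding prime_geodesic_def by auto
qed

lemma closed_geodesic_rotate:
  assumes "closed_geodesic F c"
  shows "closed_geodesic F (rotate k c)"
proof -
  have cne: "c \<noteq> []" and cD: "set c \<subseteq> dedges F"
    and ch: "\<forall>l<length c. feeds (c ! l) (c ! (Suc l mod length c))"
    using assms by (auto simp: closed_geodesic_def)
  let ?n = "length c"
  have "\<forall>l<length (rotate k c). feeds (rotate k c ! l) (rotate k c ! (Suc l mod length (rotate k c)))"
  proof (intro allI impI)
    fix l assume l: "l < length (rotate k c)"
    then have l': "l < ?n" by simp
    have n0: "0 < ?n" using cne by simp
    have a: "rotate k c ! l = c ! ((k + l) mod ?n)" using nth_rotate[OF l'] .
    have b: "rotate k c ! (Suc l mod ?n) = c ! ((k + Suc l mod ?n) mod ?n)"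
      using nth_rotate[of "Suc l mod ?n" c k] n0 by simp
    have "(k + Suc l mod ?n) mod ?n = Suc ((k + l) mod ?n) mod ?n"
      by (simp add: mod_add_right_eq mod_Suc_eq)
    moreover have "(k + l) mod ?n < ?n" using n0 by simp
    ultimately show "feeds (rotate k c ! l) (rotate k c ! (Suc l mod length (rotate k c)))"
      using ch a b by simp
  qed
  then show ?thesis using cne cD by (simp add: closed_geodesic_def)
qed

lemma prime_geodesic_rotate: "prime_geodesic F c \<Longrightarrow> prime_geodesic F (rotate k c)"
  using closed_geodesic_rotate per_rotate prime_geodesic_iff by (metis length_rotate)

lemma closed_geodesic_concat:
  assumes "closed_geodesic F d" "m \<ge> 1"
  shows "closed_geodesic F (concat (replicate m d))"
proof -
  let ?c = "concat (replicate m d)" and ?k = "length d"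
  have dne: "d \<noteq> []" and dD: "set d \<subseteq> dedges F"
    and ch: "\<forall>l<length d. feeds (d ! l) (d ! (Suc l mod length d))"
    using assms by (auto simp: closed_geodesic_def)
  have lc: "length ?c = m * ?k" by (rule concat_rep_length)
  have k0: "0 < ?k" using dne by simp
  have cne: "?c \<noteq> []" using lc k0 assms(2) by (metis length_0_conv mult_is_0 not_one_le_zero neq0_conv)
  have cD: "set ?c \<subseteq> dedges F" using dD assms(2) by auto
  have "\<forall>l<length ?c. feeds (?c ! l) (?c ! (Suc l mod length ?c))"
  proof (intro allI impI)
    fix l assume l: "l < length ?c"
    have a: "?c ! l = d ! (l mod ?k)" using concat_rep_nth[of l m d] l lc by simp
    have "0 < length ?c" using l by linarith
    then have "Suc l mod length ?c < length ?c" by simp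
    then have "?c ! (Suc l mod length ?c) = d ! (Suc l mod length ?c mod ?k)"
      using concat_rep_nth[of "Suc l mod length ?c" m d] lc by simp
    also have "Suc l mod length ?c mod ?k = Suc (l mod ?k) mod ?k"
      using lc by (simp add: mod_mod_cancel mod_Suc_eq)
    finally show "feeds (?c ! l) (?c ! (Suc l mod length ?c))" using a ch k0 by simp
  qed
  then show ?thesis using cne cD by (simp add: closed_geodesic_def)
qed

lemma closed_geodesic_take_per:
  assumes "closed_geodesic F c"
  shows "closed_geodesic F (take (per c) c)"
proof -
  have cne: "c \<noteq> []" and cD: "set c \<subseteq> dedges F"
    and ch: "\<forall>l<length c. feeds (c ! l) (c ! (Suc l mod length c))"
    using assms by (auto simp: closed_geodesic_def)
  let ?p = "per c" and ?d = "take (per c) c"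
  have p: "0 < ?p" "rotate ?p c = c" "?p \<le> length c" using per_basic[OF cne] by auto
  have pn: "?p dvd length c" using per_dvd[OF cne, of "length c"] by simp
  have ld: "length ?d = ?p" using p by simp
  have "\<forall>l<length ?d. feeds (?d ! l) (?d ! (Suc l mod length ?d))"
  proof (intro allI impI)
    fix l assume l: "l < length ?d"
    then have l': "l < length c" using ld p by simp
    have "c ! (Suc l mod length c) = c ! (Suc l mod length c mod ?p)"
      using per_nth[OF cne, of "Suc l mod length c"] cne by simp
    also have "Suc l mod length c mod ?p = Suc l mod ?p" using pn by (simp add: mod_mod_cancel)
    also have "c ! (Suc l mod ?p) = ?d ! (Suc l mod ?p)" using p by simp
    finally have e: "c ! (Suc l mod length c) = ?d ! (Suc l mod ?p)" .
    have "feeds (c ! l) (c ! (Suc l mod length c))" using ch l' by simp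
    then show "feeds (?d ! l) (?d ! (Suc l mod length ?d))" using e l ld by simp
  qed
  moreover have "?d \<noteq> []" using ld p by auto
  moreover have "set ?d \<subseteq> dedges F" using cD by (meson order_trans set_take_subset)
  ultimately show ?thesis by (simp add: closed_geodesic_def)
qed


lemma cyc_class_range:
  assumes "c \<noteq> []"
  shows "cyc_class c = range (\<lambda>k. rotate k c)"
proof
  show "cyc_class c \<subseteq> range (\<lambda>k. rotate k c)" unfolding cyc_class_def by auto
  show "range (\<lambda>k. rotate k c) \<subseteq> cyc_class c"
  proof
    fix x assume "x \<in> range (\<lambda>k. rotate k c)"
    then obtain k where x: "x = rotate k c" by auto
    have "x = rotate (k mod length c) c" using x rotate_conv_mod by metis
    moreover have "k mod length c < length c" using assms by simp
    ultimately show "x \<in> cyc_class c" unfolding cyc_class_def by auto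
  qed
qed

lemma cyc_class_self: "c \<noteq> [] \<Longrightarrow> c \<in> cyc_class c"
  unfolding cyc_class_def by (auto intro: image_eqI[where x=0])

lemma cyc_class_eq:
  assumes "c \<noteq> []" "x \<in> cyc_class c"
  shows "cyc_class x = cyc_class c"
proof -
  obtain i where x: "x = rotate i c" using assms(2) unfolding cyc_class_def by auto
  have xne: "x \<noteq> []" using x assms by simp
  have "range (\<lambda>k. rotate k x) = range (\<lambda>k. rotate k c)"
  proof
    show "range (\<lambda>k. rotate k x) \<subseteq> range (\<lambda>k. rotate k c)"
      using x by (auto simp: rotate_rotate)
    show "range (\<lambda>k. rotate k c) \<subseteq> range (\<lambda>k. rotate k x)"
    proof
      fix y assume "y \<in> range (\<lambda>k. rotate k c)"
      then obtain k where y: "y = rotate k c" by auto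
      let ?n = "length c"
      have "rotate (k + ?n * i - i) x = rotate (k + ?n * i - i + i) c" using x by (simp add: rotate_rotate)
      also have "k + ?n * i - i + i = k + ?n * i"
      proof -
        have "1 \<le> ?n" using assms(1) by (simp add: Suc_le_eq)
        then have h: "1 * i \<le> ?n * i" by (rule mult_le_mono1)
        then show ?thesis by linarith
      qed
      also have "rotate (k + ?n * i) c = rotate k c"
      proof -
        have "(k + ?n * i) mod ?n = k mod ?n" by simp
        then show ?thesis using rotate_conv_mod[of "k + ?n * i" c] rotate_conv_mod[of k c] by simp
      qed
      finally show "y \<in> range (\<lambda>k. rotate k x)" using y by (metis rangeI)
    qed
  qed
  then show ?thesis using cyc_class_range[OF xne] cyc_class_range[OF assms(1)] by simp
qed

lemma cyc_class_inj:
  assumes "c \<noteq> []" "per c = length c"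
  shows "inj_on (\<lambda>i. rotate i c) {..<length c}"
proof (rule inj_onI)
  fix i j assume i: "i \<in> {..<length c}" and j: "j \<in> {..<length c}" and e: "rotate i c = rotate j c"
  let ?n = "length c"
  have key: "\<And>a b. a < ?n \<Longrightarrow> b < ?n \<Longrightarrow> a < b \<Longrightarrow> rotate a c = rotate b c \<Longrightarrow> False"
  proof -
    fix a b assume a: "a < ?n" and b: "b < ?n" and ab: "a < b" and e: "rotate a c = rotate b c"
    have "rotate (?n - b) (rotate a c) = rotate (?n - b) (rotate b c)" using e by simp
    then have "rotate (?n - b + a) c = rotate ?n c" using b by (simp add: rotate_rotate)
    then have "rotate (?n - b + a) c = c" by simp
    then have "per c dvd (?n - b + a)" using per_dvd[OF assms(1)] by simp
    moreover have "0 < ?n - b + a" "?n - b + a < ?n" using a b ab by auto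
    ultimately show False using assms(2) by (metis dvd_imp_le not_le)
  qed
  have i': "i < ?n" and j': "j < ?n" using i j by auto
  show "i = j"
  proof (rule ccontr)
    assume "i \<noteq> j"
    then consider "i < j" | "j < i" by linarith
    then show False
    proof cases
      case 1 show False by (rule key[OF i' j' 1 e])
    next
      case 2 show False by (rule key[OF j' i' 2 e[symmetric]])
    qed
  qed
qed

lemma card_cyc_class:
  assumes "c \<noteq> []" "per c = length c"
  shows "card (cyc_class c) = length c"
  unfolding cyc_class_def using card_image[OF cyc_class_inj[OF assms]] by simp

lemma prime_cycle_props:
  assumes "P \<in> prime_cycles F"
  shows "(SOME c. c \<in> P) \<in> P" "\<And>x. x \<in> P \<Longrightarrow> prime_geodesic F x \<and> length x = cyc_len P \<and> P = cyc_class x"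
    "finite P" "card P = cyc_len P" "cyc_len P > 0"
proof -
  obtain d where d: "prime_geodesic F d" and P: "P = cyc_class d" using assms unfolding prime_cycles_def by auto
  have dne: "d \<noteq> []" using d by (simp add: prime_geodesic_def closed_geodesic_def)
  have pd: "per d = length d" using d prime_geodesic_iff by auto
  have mem: "\<And>x. x \<in> P \<Longrightarrow> prime_geodesic F x \<and> length x = length d \<and> P = cyc_class x"
  proof -
    fix x assume x: "x \<in> P"
    then obtain i where "x = rotate i d" using P unfolding cyc_class_def by auto
    then show "prime_geodesic F x \<and> length x = length d \<and> P = cyc_class x"
      using prime_geodesic_rotate[OF d] cyc_class_eq[OF dne] x P by auto
  qed
  show some: "(SOME c. c \<in> P) \<in> P" using cyc_class_self[OF dne] P by (metis someI)
  have cl: "cyc_len P = length d" using mem[OF some] unfolding cyc_len_def by simp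
  show "\<And>x. x \<in> P \<Longrightarrow> prime_geodesic F x \<and> length x = cyc_len P \<and> P = cyc_class x" using mem cl by auto
  show "finite P" using P unfolding cyc_class_def by simp
  show "card P = cyc_len P" using card_cyc_class[OF dne pd] P cl by simp
  show "cyc_len P > 0" using cl dne by simp
qed

lemma finite_prime_len:
  assumes "finite (dedges F)"
  shows "finite {d. prime_geodesic F d \<and> length d \<le> n}"
proof -
  have "finite {d. set d \<subseteq> dedges F \<and> length d \<le> n}" using finite_lists_length_le[OF assms] .
  then show ?thesis by (rule rev_finite_subset) (auto simp: prime_geodesic_def closed_geodesic_def)
qed

lemma finite_prime_cycles_len:
  assumes "finite (dedges F)"
  shows "finite {P \<in> prime_cycles F. cyc_len P \<le> n}"
proof -
  have "{P \<in> prime_cycles F. cyc_len P \<le> n} \<subseteq> cyc_class ` {d. prime_geodesic F d \<and> length d \<le> n}"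
  proof
    fix P assume P: "P \<in> {P \<in> prime_cycles F. cyc_len P \<le> n}"
    let ?x = "SOME c. c \<in> P"
    have "?x \<in> P" using prime_cycle_props(1) P by auto
    then have "prime_geodesic F ?x \<and> length ?x = cyc_len P \<and> P = cyc_class ?x"
      using prime_cycle_props(2) P by blast
    then show "P \<in> cyc_class ` {d. prime_geodesic F d \<and> length d \<le> n}" using P by auto
  qed
  then show ?thesis using finite_prime_len[OF assms] by (meson finite_surj)
qed

lemma sum_primes_by_cycles:
  assumes "finite (dedges F)" "m \<ge> 1"
  shows "(\<Sum>d\<in>{d. prime_geodesic F d \<and> length d dvd m}. h d)
       = (\<Sum>P\<in>{P \<in> prime_cycles F. cyc_len P dvd m}. \<Sum>d\<in>P. h d)"
proof -
  let ?I = "{P \<in> prime_cycles F. cyc_len P dvd m}"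
  have sub: "?I \<subseteq> {P \<in> prime_cycles F. cyc_len P \<le> m}" using assms(2) by (auto intro: dvd_imp_le)
  have finI: "finite ?I" using finite_prime_cycles_len[OF assms(1), of m] sub by (rule finite_subset[rotated])
  have U: "{d. prime_geodesic F d \<and> length d dvd m} = \<Union> ?I"
  proof
    show "{d. prime_geodesic F d \<and> length d dvd m} \<subseteq> \<Union> ?I"
    proof
      fix d assume d: "d \<in> {d. prime_geodesic F d \<and> length d dvd m}"
      have dne: "d \<noteq> []" using d by (simp add: prime_geodesic_def closed_geodesic_def)
      have P: "cyc_class d \<in> prime_cycles F" using d unfolding prime_cycles_def by auto
      have "cyc_len (cyc_class d) = length d"
        using prime_cycle_props(2)[OF P cyc_class_self[OF dne]] by simp
      then show "d \<in> \<Union> ?I" using P d cyc_class_self[OF dne] by auto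
    qed
    show "\<Union> ?I \<subseteq> {d. prime_geodesic F d \<and> length d dvd m}"
      using prime_cycle_props(2) by fastforce
  qed
  have disj: "\<forall>P\<in>?I. \<forall>Q\<in>?I. P \<noteq> Q \<longrightarrow> P \<inter> Q = {}"
  proof (intro ballI impI)
    fix P Q assume P: "P \<in> ?I" and Q: "Q \<in> ?I" and ne: "P \<noteq> Q"
    show "P \<inter> Q = {}"
    proof (rule ccontr)
      assume "P \<inter> Q \<noteq> {}"
      then obtain x where "x \<in> P" "x \<in> Q" by auto
      then have "P = cyc_class x" "Q = cyc_class x" using prime_cycle_props(2) P Q by blast+
      then show False using ne by simp
    qed
  qed
  have fin: "\<forall>A\<in>?I. finite A" using prime_cycle_props(3) by blast
  show ?thesis unfolding U using sum.Union_disjoint[OF fin disj, of h] by simp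
qed

lemma sum_cycle_rot:
  assumes "P \<in> prime_cycles F"
    and inv: "\<And>x k. prime_geodesic F x \<Longrightarrow> h (rotate k x) = h x"
  shows "(\<Sum>d\<in>P. h d) = of_nat (cyc_len P) * h (SOME c. c \<in> P)"
proof -
  let ?x = "SOME c. c \<in> P"
  have x: "?x \<in> P" by (rule prime_cycle_props(1)[OF assms(1)])
  have xp: "prime_geodesic F ?x" "P = cyc_class ?x" using prime_cycle_props(2)[OF assms(1) x] by auto
  have "\<And>d. d \<in> P \<Longrightarrow> h d = h ?x"
  proof -
    fix d assume "d \<in> P"
    then obtain i where "d = rotate i ?x" using xp unfolding cyc_class_def by auto
    then show "h d = h ?x" using inv[OF xp(1)] by simp
  qed
  then have "(\<Sum>d\<in>P. h d) = (\<Sum>d\<in>P. h ?x)" by (rule sum.cong[OF refl])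
  also have "\<dots> = of_nat (card P) * h ?x" by simp
  finally show ?thesis using prime_cycle_props(4)[OF assms(1)] by simp
qed

lemma take_concat_rep: "m \<ge> 1 \<Longrightarrow> take (length d) (concat (replicate m d)) = d"
  by (cases m) auto

lemma CG_bij:
  assumes "m \<ge> 1"
  shows "bij_betw (\<lambda>d. concat (replicate (m div length d) d))
     {d. prime_geodesic F d \<and> length d dvd m} {c. closed_geodesic F c \<and> length c = m}"
proof (rule bij_betwI')
  fix d d' assume d: "d \<in> {d. prime_geodesic F d \<and> length d dvd m}" and d': "d' \<in> {d. prime_geodesic F d \<and> length d dvd m}"
  have dne: "d \<noteq> []" "d' \<noteq> []" using d d' by (auto simp: prime_geodesic_def closed_geodesic_def)
  have pd: "per d = length d" "per d' = length d'" using d d' prime_geodesic_iff by auto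
  have q: "m div length d \<ge> 1" "m div length d' \<ge> 1" using d d' dne assms
    by (auto simp: dvd_imp_le div_greater_zero_iff Suc_le_eq)
  show "(concat (replicate (m div length d) d) = concat (replicate (m div length d') d')) = (d = d')"
  proof
    assume e: "concat (replicate (m div length d) d) = concat (replicate (m div length d') d')"
    have "length d = length d'" using per_concat[OF dne(1) pd(1) q(1)] per_concat[OF dne(2) pd(2) q(2)] e by simp
    then show "d = d'" using take_concat_rep[OF q(1), of d] take_concat_rep[OF q(2), of d'] e by metis
  qed simp
next
  fix d assume d: "d \<in> {d. prime_geodesic F d \<and> length d dvd m}"
  have dne: "d \<noteq> []" using d by (auto simp: prime_geodesic_def closed_geodesic_def)
  have q: "m div length d \<ge> 1" using d dne assms by (auto simp: dvd_imp_le div_greater_zero_iff Suc_le_eq)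
  have cg: "closed_geodesic F d" using d by (simp add: prime_geodesic_def)
  show "concat (replicate (m div length d) d) \<in> {c. closed_geodesic F c \<and> length c = m}"
    using closed_geodesic_concat[OF cg q] d by (simp add: concat_rep_length)
next
  fix c assume c: "c \<in> {c. closed_geodesic F c \<and> length c = m}"
  have cne: "c \<noteq> []" using c by (simp add: closed_geodesic_def)
  let ?p = "per c" and ?d = "take (per c) c"
  have tp: "per ?d = ?p" "length ?d = ?p" using take_per_prim[OF cne] by auto
  have p: "0 < ?p" "?p \<le> length c" using per_basic[OF cne] by auto
  have pn: "?p dvd m" using per_dvd[OF cne, of "length c"] c by simp
  have dprime: "prime_geodesic F ?d"
    unfolding prime_geodesic_iff using closed_geodesic_take_per[of F c] c tp by simp
  have "c = concat (replicate (m div ?p) ?d)"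
  proof (rule eq_concat_rep)
    show "length c = m div ?p * length ?d" using tp pn c by simp
    show "\<forall>i<length c. c ! i = ?d ! (i mod length ?d)"
      using per_nth[OF cne] tp p by simp
  qed
  then show "\<exists>d\<in>{d. prime_geodesic F d \<and> length d dvd m}. c = concat (replicate (m div length d) d)"
    using dprime tp pn by (intro bexI[where x="?d"]) auto
qed


primrec pwf :: "('v dedge \<Rightarrow> nat) \<Rightarrow> ('v dedge \<Rightarrow> 'v dedge \<Rightarrow> complex mat) \<Rightarrow> (nat \<Rightarrow> 'v dedge) \<Rightarrow> nat \<Rightarrow> complex mat" where
  "pwf r u f 0 = 1\<^sub>m (r (f 0))"
| "pwf r u f (Suc l) = u (f l) (f (Suc l)) * pwf r u f l"

lemma pi_aux_pwf:
  assumes "c \<noteq> []" "l \<le> length c"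
  shows "pi_aux r u c l = pwf r u (\<lambda>i. c ! (i mod length c)) l"
  using assms
proof (induction l)
  case 0 then show ?case by (simp add: hd_conv_nth)
next
  case (Suc l) then show ?case by simp
qed

lemma trace_pow_swap:
  assumes X: "X \<in> carrier_mat a b" and Y: "Y \<in> carrier_mat b a"
  shows "mtrace ((X * Y) ^\<^sub>m Suc q) = mtrace ((Y * X) ^\<^sub>m Suc q)"
proof -
  have XY: "X * Y \<in> carrier_mat a a" and YX: "Y * X \<in> carrier_mat b b" using X Y by auto
  have comm: "(X * Y) ^\<^sub>m q * X = X * (Y * X) ^\<^sub>m q" for q
  proof (induction q)
    case 0 then show ?case using X Y by simp
  next
    case (Suc q)
    have P1: "(X * Y) ^\<^sub>m q \<in> carrier_mat a a" and P2: "(Y * X) ^\<^sub>m q \<in> carrier_mat b b" using XY YX by auto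
    have "(X * Y) ^\<^sub>m Suc q * X = ((X * Y) ^\<^sub>m q * (X * Y)) * X" by simp
    also have "\<dots> = (X * Y) ^\<^sub>m q * ((X * Y) * X)" by (rule assoc_mult_mat[OF P1 XY X])
    also have "(X * Y) * X = X * (Y * X)" by (rule assoc_mult_mat[OF X Y X])
    also have "(X * Y) ^\<^sub>m q * (X * (Y * X)) = ((X * Y) ^\<^sub>m q * X) * (Y * X)"
      by (rule assoc_mult_mat[OF P1 X YX, symmetric])
    also have "\<dots> = X * (Y * X) ^\<^sub>m q * (Y * X)" using Suc by simp
    also have "\<dots> = X * (Y * X) ^\<^sub>m Suc q" using X P2 YX by (simp add: assoc_mult_mat[of _ a b _ b _ b])
    finally show ?case .
  qed
  have P: "(Y * X) ^\<^sub>m q \<in> carrier_mat b b" and P1: "(X * Y) ^\<^sub>m q \<in> carrier_mat a a" using XY YX by auto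
  have "(X * Y) ^\<^sub>m Suc q = ((X * Y) ^\<^sub>m q * X) * Y" using P1 X Y by (simp add: assoc_mult_mat[of _ a a _ b _ a])
  also have "\<dots> = X * ((Y * X) ^\<^sub>m q * Y)" using comm X Y P by (simp add: assoc_mult_mat[of _ a b _ b _ a])
  finally have "mtrace ((X * Y) ^\<^sub>m Suc q) = mtrace (X * ((Y * X) ^\<^sub>m q * Y))" by simp
  also have "\<dots> = mtrace (((Y * X) ^\<^sub>m q * Y) * X)" using X P Y by (intro mtrace_mult_comm) auto
  also have "\<dots> = mtrace ((Y * X) ^\<^sub>m Suc q)" using X P Y by (simp add: assoc_mult_mat[of _ b b _ a _ b])
  finally show ?thesis .
qed

context hg
begin

lemma cg_props:
  assumes "closed_geodesic F c"
  shows "\<And>i. c ! (i mod length c) \<in> dedges F"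
    "\<And>i. feeds (c ! (i mod length c)) (c ! (Suc i mod length c))"
proof -
  have cne: "c \<noteq> []" and cD: "set c \<subseteq> dedges F"
    and ch: "\<forall>l<length c. feeds (c ! l) (c ! (Suc l mod length c))"
    using assms by (auto simp: closed_geodesic_def)
  fix i
  have im: "i mod length c < length c" using cne by simp
  then show "c ! (i mod length c) \<in> dedges F" using cD by auto
  have "feeds (c ! (i mod length c)) (c ! (Suc (i mod length c) mod length c))" using ch im by simp
  then show "feeds (c ! (i mod length c)) (c ! (Suc i mod length c))" by (simp add: mod_Suc_eq)
qed

lemma pwf_carrier:
  assumes "\<And>i. f i \<in> dedges F" "\<And>i. feeds (f i) (f (Suc i))"
  shows "pwf r u f l \<in> carrier_mat (r (f l)) (r (f 0))"
proof (induction l)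
  case 0 then show ?case by simp
next
  case (Suc l)
  have "u (f l) (f (Suc l)) \<in> carrier_mat (r (f (Suc l))) (r (f l))" using Ucar assms by auto
  then show ?case using Suc by simp
qed

lemma pwf_split:
  assumes "\<And>i. f i \<in> dedges F" "\<And>i. feeds (f i) (f (Suc i))"
  shows "pwf r u f (Suc l) = pwf r u (\<lambda>i. f (Suc i)) l * u (f 0) (f (Suc 0))"
proof (induction l)
  case 0
  have "u (f 0) (f (Suc 0)) \<in> carrier_mat (r (f (Suc 0))) (r (f 0))" using Ucar assms by auto
  then show ?case by simp
next
  case (Suc l)
  have U1: "u (f (Suc l)) (f (Suc (Suc l))) \<in> carrier_mat (r (f (Suc (Suc l)))) (r (f (Suc l)))" using Ucar assms by auto
  have U0: "u (f 0) (f (Suc 0)) \<in> carrier_mat (r (f (Suc 0))) (r (f 0))" using Ucar assms by auto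
  have G: "pwf r u (\<lambda>i. f (Suc i)) l \<in> carrier_mat (r (f (Suc l))) (r (f (Suc 0)))"
    using pwf_carrier[of "\<lambda>i. f (Suc i)" l] assms by simp
  have "pwf r u f (Suc (Suc l)) = u (f (Suc l)) (f (Suc (Suc l))) * (pwf r u (\<lambda>i. f (Suc i)) l * u (f 0) (f (Suc 0)))"
    using Suc by simp
  also have "\<dots> = (u (f (Suc l)) (f (Suc (Suc l))) * pwf r u (\<lambda>i. f (Suc i)) l) * u (f 0) (f (Suc 0))"
    using U1 G U0 by (simp add: assoc_mult_mat)
  finally show ?case by simp
qed

lemma pi_mat_carrier:
  assumes "closed_geodesic F c"
  shows "pi_mat r u c \<in> carrier_mat (r (hd c)) (r (hd c))"
proof -
  have cne: "c \<noteq> []" using assms by (simp add: closed_geodesic_def)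
  have "pi_mat r u c = pwf r u (\<lambda>i. c ! (i mod length c)) (length c)"
    using pi_aux_pwf[OF cne] by (simp add: pi_mat_def)
  moreover have "pwf r u (\<lambda>i. c ! (i mod length c)) (length c) \<in> carrier_mat (r (c ! (length c mod length c))) (r (c ! (0 mod length c)))"
    by (rule pwf_carrier) (use cg_props[OF assms] in auto)
  ultimately show ?thesis using cne by (simp add: hd_conv_nth)
qed

lemma trace_rot1:
  assumes "closed_geodesic F d"
  shows "mtrace (pi_mat r u (rotate 1 d) ^\<^sub>m Suc q) = mtrace (pi_mat r u d ^\<^sub>m Suc q)"
proof -
  let ?k = "length d"
  define f where "f = (\<lambda>i. d ! (i mod ?k))"
  define g where "g = (\<lambda>i. f (Suc i))"
  have dne: "d \<noteq> []" using assms by (simp add: closed_geodesic_def)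
  have k0: "0 < ?k" using dne by simp
  have fD: "\<And>i. f i \<in> dedges F" and ff: "\<And>i. feeds (f i) (f (Suc i))"
    using cg_props[OF assms] unfolding f_def by auto
  have gD: "\<And>i. g i \<in> dedges F" and gg: "\<And>i. feeds (g i) (g (Suc i))"
    using fD ff unfolding g_def by auto
  obtain k' where k': "?k = Suc k'" using k0 by (cases ?k) auto
  define X where "X = pwf r u g k'"
  define Y where "Y = u (f 0) (f (Suc 0))"
  have Xc: "X \<in> carrier_mat (r (f ?k)) (r (f (Suc 0)))" using pwf_carrier[of g k', OF gD gg] k' unfolding X_def g_def by simp
  have Yc: "Y \<in> carrier_mat (r (f (Suc 0))) (r (f 0))" using Ucar fD ff unfolding Y_def by auto
  have fk: "f ?k = f 0" unfolding f_def by simp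
  have fk1: "f (Suc ?k) = f (Suc 0)" unfolding f_def using mod_add_self2[of 1 ?k] by simp
  have P1: "pi_mat r u d = X * Y"
    using pi_aux_pwf[OF dne, of ?k] pwf_split[of f k', OF fD ff] k'
    unfolding pi_mat_def X_def Y_def f_def g_def by simp
  have rd: "rotate 1 d \<noteq> []" "length (rotate 1 d) = ?k" using dne by auto
  have rf: "(\<lambda>i. rotate 1 d ! (i mod length (rotate 1 d))) = g"
  proof
    fix i
    have "rotate 1 d ! (i mod ?k) = d ! ((1 + i mod ?k) mod ?k)" using nth_rotate[of "i mod ?k" d 1] k0 by simp
    also have "(1 + i mod ?k) mod ?k = Suc i mod ?k" by (simp add: mod_Suc_eq)
    finally show "rotate 1 d ! (i mod length (rotate 1 d)) = g i" unfolding g_def f_def by simp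
  qed
  have "pi_mat r u (rotate 1 d) = pwf r u g ?k"
    using pi_aux_pwf[OF rd(1), of ?k] rd rf unfolding pi_mat_def by simp
  also have "\<dots> = u (g k') (g ?k) * X" unfolding X_def using k' by simp
  also have "u (g k') (g ?k) = Y" unfolding g_def Y_def using k' fk fk1 by simp
  finally have P2: "pi_mat r u (rotate 1 d) = Y * X" .
  show ?thesis unfolding P1 P2 using trace_pow_swap[OF Xc Yc[folded fk]] by simp
qed

lemma trace_rot:
  assumes "closed_geodesic F d"
  shows "mtrace (pi_mat r u (rotate k d) ^\<^sub>m Suc q) = mtrace (pi_mat r u d ^\<^sub>m Suc q)"
proof (induction k)
  case 0 then show ?case by simp
next
  case (Suc k)
  have "rotate (Suc k) d = rotate 1 (rotate k d)" by (simp add: rotate_rotate)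
  then show ?case using trace_rot1[OF closed_geodesic_rotate[OF assms, of k]] Suc by simp
qed

lemma pi_mat_concat:
  assumes "closed_geodesic F d" "q \<ge> 1"
  shows "pi_mat r u (concat (replicate q d)) = pi_mat r u d ^\<^sub>m q"
proof -
  let ?k = "length d" and ?c = "concat (replicate q d)"
  let ?P = "pi_mat r u d"
  have dne: "d \<noteq> []" using assms by (simp add: closed_geodesic_def)
  have k0: "0 < ?k" using dne by simp
  have lc: "length ?c = q * ?k" by (rule concat_rep_length)
  have cne: "?c \<noteq> []" using lc k0 assms(2) by (metis length_0_conv mult_is_0 not_one_le_zero neq0_conv)
  define f where "f = (\<lambda>i. d ! (i mod ?k))"
  have fD: "\<And>i. f i \<in> dedges F" and ff: "\<And>i. feeds (f i) (f (Suc i))"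
    using cg_props[OF assms(1)] unfolding f_def by auto
  have cf: "\<And>i. ?c ! (i mod length ?c) = f i"
  proof -
    fix i
    have "i mod length ?c < length ?c" using cne by simp
    then have "?c ! (i mod length ?c) = d ! (i mod length ?c mod ?k)" using concat_rep_nth lc by metis
    also have "i mod length ?c mod ?k = i mod ?k" using lc by (simp add: mod_mod_cancel)
    finally show "?c ! (i mod length ?c) = f i" unfolding f_def .
  qed
  have Pd: "?P = pwf r u f ?k" using pi_aux_pwf[OF dne, of ?k] unfolding pi_mat_def f_def by simp
  have Pc: "?P \<in> carrier_mat (r (f 0)) (r (f 0))" using pi_mat_carrier[OF assms(1)] dne unfolding f_def by (simp add: hd_conv_nth)
  have pf: "\<And>l. l \<le> ?k \<Longrightarrow> pwf r u f l = pi_aux r u d l"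
    using pi_aux_pwf[OF dne] unfolding f_def by simp
  have main: "pwf r u f i = pwf r u f (i mod ?k) * ?P ^\<^sub>m (i div ?k)" for i
  proof (induction i)
    case 0 then show ?case using Pc by simp
  next
    case (Suc i)
    let ?a = "i mod ?k" and ?b = "i div ?k"
    have U: "u (f i) (f (Suc i)) \<in> carrier_mat (r (f (Suc i))) (r (f i))" using Ucar fD ff by auto
    have A: "pwf r u f ?a \<in> carrier_mat (r (f ?a)) (r (f 0))" using pwf_carrier[of f, OF fD ff] .
    have Pb: "?P ^\<^sub>m ?b \<in> carrier_mat (r (f 0)) (r (f 0))" using Pc by simp
    have fa: "f ?a = f i" unfolding f_def by simp
    have fsa: "f (Suc ?a) = f (Suc i)" unfolding f_def by (simp add: mod_Suc_eq)
    have "pwf r u f (Suc i) = u (f i) (f (Suc i)) * (pwf r u f ?a * ?P ^\<^sub>m ?b)" using Suc by simp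
    also have "\<dots> = (u (f i) (f (Suc i)) * pwf r u f ?a) * ?P ^\<^sub>m ?b"
      using U A Pb fa by (simp add: assoc_mult_mat)
    also have "u (f i) (f (Suc i)) * pwf r u f ?a = pwf r u f (Suc ?a)" using fa fsa by simp
    finally have E: "pwf r u f (Suc i) = pwf r u f (Suc ?a) * ?P ^\<^sub>m ?b" .
    show ?case
    proof (cases "Suc ?a < ?k")
      case True
      then have "Suc i mod ?k = Suc ?a" "Suc i div ?k = ?b" by (simp_all add: mod_Suc div_Suc)
      then show ?thesis using E by simp
    next
      case False
      then have sa: "Suc ?a = ?k" using k0 by (metis Suc_lessI mod_less_divisor)
      then have "Suc i mod ?k = 0" "Suc i div ?k = Suc ?b" using k0 by (simp_all add: mod_Suc div_Suc)
      moreover have "pwf r u f (Suc ?a) = ?P" using sa Pd by simp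
      moreover have "?P * ?P ^\<^sub>m ?b = ?P ^\<^sub>m Suc ?b" using pow_mat_Suc_left[OF Pc] by simp
      ultimately show ?thesis using E Pc by (simp add: pow_mat_Suc_left[OF Pc])
    qed
  qed
  have "pi_mat r u ?c = pwf r u (\<lambda>i. ?c ! (i mod length ?c)) (length ?c)"
    using pi_aux_pwf[OF cne] unfolding pi_mat_def by simp
  also have "(\<lambda>i. ?c ! (i mod length ?c)) = f" using cf by auto
  also have "pwf r u f (length ?c) = ?P ^\<^sub>m q" using main[of "length ?c"] lc k0 Pc by simp
  finally show ?thesis .
qed

end


lemma prodF_append: "prodF (xs @ ys) = prodF xs * prodF ys"
  by (simp add: prodF_def)

lemma prodF_concat: "prodF (concat Ls) = prod_list (map prodF Ls)"
  by (induction Ls) (simp_all add: prodF_append, simp add: prodF_def)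

lemma PS_append: "PS (xs @ ys) m = PS xs m + PS ys m"
  by (simp add: PS_def)

lemma PS_concat: "PS (concat Ls) m = sum_list (map (\<lambda>L. PS L m) Ls)"
  by (induction Ls) (simp_all add: PS_append, simp add: PS_def)

lemma PS_map: "PS (map (\<lambda>l. (l,k)) ls) m = (if k dvd m then of_nat k * sum_list (map (\<lambda>l. l ^ (m div k)) ls) else 0)"
  by (induction ls) (auto simp: PS_def algebra_simps)

lemma prodF_map: "prodF (map (\<lambda>l. (l,k)) ls) = prod_list (map (\<lambda>l. 1 - fps_X ^ k * fps_const l) ls)"
  unfolding prodF_def fac_def by (simp add: o_def mult.commute)

lemma inverse_prod_list: "inverse (prod_list xs :: complex fps) = prod_list (map inverse xs)"
  by (induction xs) (simp_all add: fps_inverse_mult)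

lemma fps_mult_low_zero:
  fixes a b :: "complex fps"
  assumes "\<forall>i\<le>n. fps_nth b i = 0"
  shows "fps_nth (a * b) n = 0"
  unfolding fps_mult_nth using assms by (intro sum.neutral) auto

lemma inverse_agree:
  fixes a b :: "complex fps"
  assumes "fps_nth a 0 \<noteq> 0" "fps_nth b 0 \<noteq> 0" "\<forall>i\<le>n. fps_nth a i = fps_nth b i"
  shows "fps_nth (inverse a) n = fps_nth (inverse b) n"
proof -
  have "inverse a - inverse b = inverse a * inverse b * (b - a)"
  proof -
    have "inverse a * inverse b * (b - a) = inverse a * (inverse b * b) - inverse b * (inverse a * a)"
      by (simp add: algebra_simps)
    also have "\<dots> = inverse a - inverse b" using assms(1,2) by (simp add: inverse_mult_eq_1)
    finally show ?thesis by simp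
  qed
  moreover have "fps_nth (inverse a * inverse b * (b - a)) n = 0"
    by (rule fps_mult_low_zero) (use assms(3) in simp)
  ultimately show ?thesis by (metis eq_iff_diff_eq_0 fps_sub_nth)
qed

lemma inv_inv:
  fixes f :: "complex fps"
  assumes "fps_nth f 0 = 1"
  shows "inverse (inverse f) = f"
  using assms by simp

definition eig :: "complex mat \<Rightarrow> complex list" where
  "eig B = (SOME ls. length ls = dim_row B \<and>
    (\<forall>Y. det (1\<^sub>m (dim_row B) - map_mat (\<lambda>x. Y * fps_const x) B) = prod_list (map (\<lambda>l. 1 - Y * fps_const l) ls)) \<and>
    (\<forall>m. mtrace (B ^\<^sub>m m) = sum_list (map (\<lambda>l. l ^ m) ls)))"

lemma eig_props:
  assumes "B \<in> carrier_mat n n"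
  shows "\<And>Y. det (1\<^sub>m (dim_row B) - map_mat (\<lambda>x. Y * fps_const x) B) = prod_list (map (\<lambda>l. 1 - Y * fps_const l) (eig B))"
    "\<And>m. mtrace (B ^\<^sub>m m) = sum_list (map (\<lambda>l. l ^ m) (eig B))"
proof -
  have "\<exists>ls. length ls = dim_row B \<and>
    (\<forall>Y. det (1\<^sub>m (dim_row B) - map_mat (\<lambda>x. Y * fps_const x) B) = prod_list (map (\<lambda>l. 1 - Y * fps_const l) ls)) \<and>
    (\<forall>m. mtrace (B ^\<^sub>m m) = sum_list (map (\<lambda>l. l ^ m) ls))"
    using eigen_decomp[OF assms] assms by simp
  then have "length (eig B) = dim_row B \<and>
    (\<forall>Y. det (1\<^sub>m (dim_row B) - map_mat (\<lambda>x. Y * fps_const x) B) = prod_list (map (\<lambda>l. 1 - Y * fps_const l) (eig B))) \<and>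
    (\<forall>m. mtrace (B ^\<^sub>m m) = sum_list (map (\<lambda>l. l ^ m) (eig B)))"
    unfolding eig_def by (rule someI_ex)
  then show "\<And>Y. det (1\<^sub>m (dim_row B) - map_mat (\<lambda>x. Y * fps_const x) B) = prod_list (map (\<lambda>l. 1 - Y * fps_const l) (eig B))"
    "\<And>m. mtrace (B ^\<^sub>m m) = sum_list (map (\<lambda>l. l ^ m) (eig B))" by auto
qed

context hg
begin

definition LP :: "'v dedge list set \<Rightarrow> (complex \<times> nat) list" where
  "LP P = map (\<lambda>l. (l, cyc_len P)) (eig (pi_mat r u (SOME c. c \<in> P)))"

lemma LP_props:
  assumes "P \<in> prime_cycles F"
  shows "cycle_factor r u P = prodF (LP P)"
    "\<And>m. PS (LP P) m = (if cyc_len P dvd m then of_nat (cyc_len P) * mtrace (pi_mat r u (SOME c. c \<in> P) ^\<^sub>m (m div cyc_len P)) else 0)"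
    "\<forall>(c,k)\<in>set (LP P). k > 0"
proof -
  let ?x = "SOME c. c \<in> P"
  have x: "?x \<in> P" by (rule prime_cycle_props(1)[OF assms])
  have xp: "prime_geodesic F ?x" "length ?x = cyc_len P" using prime_cycle_props(2)[OF assms x] by auto
  have cg: "closed_geodesic F ?x" using xp by (simp add: prime_geodesic_def)
  have Bc: "pi_mat r u ?x \<in> carrier_mat (r (hd ?x)) (r (hd ?x))" by (rule pi_mat_carrier[OF cg])
  show "cycle_factor r u P = prodF (LP P)"
    unfolding cycle_factor_def Let_def LP_def prodF_map eig_props(1)[OF Bc] xp(2) by simp
  show "\<And>m. PS (LP P) m = (if cyc_len P dvd m then of_nat (cyc_len P) * mtrace (pi_mat r u ?x ^\<^sub>m (m div cyc_len P)) else 0)"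
    unfolding LP_def PS_map eig_props(2)[OF Bc] by simp
  show "\<forall>(c,k)\<in>set (LP P). k > 0" using prime_cycle_props(5)[OF assms] unfolding LP_def by auto
qed

lemma trace_A_cycles:
  assumes m: "m \<ge> 1"
  shows "mtrace (A ^\<^sub>m m) = (\<Sum>P\<in>{P \<in> prime_cycles F. cyc_len P dvd m}.
      of_nat (cyc_len P) * mtrace (pi_mat r u (SOME c. c \<in> P) ^\<^sub>m (m div cyc_len P)))"
proof -
  let ?PG = "{d. prime_geodesic F d \<and> length d dvd m}"
  define h where "h = (\<lambda>d. if m div length d = 0 then 0 else mtrace (pi_mat r u d ^\<^sub>m (m div length d)))"
  have "mtrace (A ^\<^sub>m m) = (\<Sum>c\<in>CG m. mtrace (pi_mat r u c))" by (rule trace_pow_CG[OF m])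
  also have "\<dots> = (\<Sum>d\<in>?PG. mtrace (pi_mat r u (concat (replicate (m div length d) d))))"
    using sum.reindex_bij_betw[OF CG_bij[OF m, of F], of "\<lambda>c. mtrace (pi_mat r u c)"]
    unfolding CG_def by simp
  also have "\<dots> = (\<Sum>d\<in>?PG. h d)"
  proof (intro sum.cong refl)
    fix d assume d: "d \<in> ?PG"
    have dne: "d \<noteq> []" using d by (simp add: prime_geodesic_def closed_geodesic_def)
    have q: "m div length d \<ge> 1" using d dne m by (auto simp: dvd_imp_le div_greater_zero_iff Suc_le_eq)
    show "mtrace (pi_mat r u (concat (replicate (m div length d) d))) = h d"
      unfolding h_def using pi_mat_concat[OF _ q, of d] d q by (simp add: prime_geodesic_def)
  qed
  also have "\<dots> = (\<Sum>P\<in>{P \<in> prime_cycles F. cyc_len P dvd m}. \<Sum>d\<in>P. h d)"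
    by (rule sum_primes_by_cycles[OF finD m])
  also have "\<dots> = (\<Sum>P\<in>{P \<in> prime_cycles F. cyc_len P dvd m}. of_nat (cyc_len P) * h (SOME c. c \<in> P))"
  proof (intro sum.cong refl)
    fix P assume P: "P \<in> {P \<in> prime_cycles F. cyc_len P dvd m}"
    show "(\<Sum>d\<in>P. h d) = of_nat (cyc_len P) * h (SOME c. c \<in> P)"
    proof (rule sum_cycle_rot)
      show "P \<in> prime_cycles F" using P by simp
      fix x k assume x: "prime_geodesic F x"
      have xne: "x \<noteq> []" using x by (simp add: prime_geodesic_def closed_geodesic_def)
      show "h (rotate k x) = h x"
      proof (cases "m div length x")
        case 0 then show ?thesis unfolding h_def by simp
      next
        case (Suc q)
        then show ?thesis unfolding h_def using trace_rot[of x k q] x by (simp add: prime_geodesic_def)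
      qed
    qed
  qed
  also have "\<dots> = (\<Sum>P\<in>{P \<in> prime_cycles F. cyc_len P dvd m}.
      of_nat (cyc_len P) * mtrace (pi_mat r u (SOME c. c \<in> P) ^\<^sub>m (m div cyc_len P)))"
  proof (intro sum.cong refl)
    fix P assume P: "P \<in> {P \<in> prime_cycles F. cyc_len P dvd m}"
    have "(SOME c. c \<in> P) \<in> P" using prime_cycle_props(1)[of P F] P by simp
    then have "length (SOME c. c \<in> P) = cyc_len P" using prime_cycle_props(2) P by blast
    moreover have "m div cyc_len P \<noteq> 0" using P prime_cycle_props(5)[of P F] m
      by (auto simp: dvd_imp_le div_greater_zero_iff)
    ultimately show "of_nat (cyc_len P) * h (SOME c. c \<in> P) = of_nat (cyc_len P) * mtrace (pi_mat r u (SOME c. c \<in> P) ^\<^sub>m (m div cyc_len P))"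
      unfolding h_def by simp
  qed
  finally show ?thesis .
qed

lemma main_identity:
  "inverse (zeta_fps F r u) = det (1\<^sub>m (dim_row A) - map_mat (\<lambda>x. fps_X * fps_const x) A)"
proof -
  let ?f = "det (1\<^sub>m (dim_row A) - map_mat (\<lambda>x. fps_X * fps_const x) A)"
  have Ac: "A \<in> carrier_mat N N" by (rule M_mat_carrier)
  define L1 where "L1 = map (\<lambda>l. (l, 1::nat)) (eig A)"
  have f1: "?f = prodF L1" unfolding L1_def prodF_map eig_props(1)[OF Ac] by simp
  have L1pos: "\<forall>(c,k)\<in>set L1. k > 0" unfolding L1_def by auto
  have PS1: "PS L1 m = mtrace (A ^\<^sub>m m)" for m unfolding L1_def PS_map eig_props(2)[OF Ac] by simp
  have f0: "fps_nth ?f 0 = 1" using f1 prodF_0[OF L1pos] by simp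
  have coeff: "fps_nth (zeta_fps F r u) n = fps_nth (inverse ?f) n" for n
  proof -
    let ?S = "{P \<in> prime_cycles F. cyc_len P \<le> n}"
    have finS: "finite ?S" by (rule finite_prime_cycles_len[OF finD])
    obtain Ps where Ps: "set Ps = ?S" "distinct Ps" using finite_distinct_list[OF finS] by blast
    define g where "g = (\<Prod>P\<in>?S. cycle_factor r u P)"
    define L2 where "L2 = concat (map LP Ps)"
    have g2: "g = prodF L2"
    proof -
      have "g = prod_list (map (cycle_factor r u) Ps)" unfolding g_def Ps(1)[symmetric] using Ps(2) by (rule prod.distinct_set_conv_list)
      also have "\<dots> = prod_list (map (\<lambda>P. prodF (LP P)) Ps)"
        using LP_props(1) Ps(1) by (intro arg_cong[where f=prod_list] map_cong) auto
      finally show ?thesis unfolding L2_def prodF_concat by (simp add: o_def)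
    qed
    have L2pos: "\<forall>(c,k)\<in>set L2. k > 0" unfolding L2_def using LP_props(3) Ps(1) by fastforce
    have PS2: "PS L2 m = mtrace (A ^\<^sub>m m)" if m: "1 \<le> m" "m \<le> n" for m
    proof -
      have "PS L2 m = sum_list (map (\<lambda>P. PS (LP P) m) Ps)" unfolding L2_def PS_concat by (simp add: o_def)
      also have "\<dots> = (\<Sum>P\<in>?S. PS (LP P) m)" unfolding Ps(1)[symmetric] using Ps(2) by (rule sum.distinct_set_conv_list[symmetric])
      also have "\<dots> = (\<Sum>P\<in>?S. if cyc_len P dvd m then of_nat (cyc_len P) * mtrace (pi_mat r u (SOME c. c \<in> P) ^\<^sub>m (m div cyc_len P)) else 0)"
        using LP_props(2) by (intro sum.cong refl) auto
      also have "\<dots> = (\<Sum>P\<in>{P\<in>?S. cyc_len P dvd m}. of_nat (cyc_len P) * mtrace (pi_mat r u (SOME c. c \<in> P) ^\<^sub>m (m div cyc_len P)))"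
        by (rule sum.inter_filter[OF finS, symmetric])
      also have "{P\<in>?S. cyc_len P dvd m} = {P \<in> prime_cycles F. cyc_len P dvd m}"
      proof -
        have hl: "\<And>P. cyc_len P dvd m \<Longrightarrow> cyc_len P \<le> n"
        proof -
          fix P assume "cyc_len P dvd m"
          then have "cyc_len P \<le> m" using m(1) by (intro dvd_imp_le) auto
          then show "cyc_len P \<le> n" using m(2) by simp
        qed
        show ?thesis using hl by auto
      qed
      also have "(\<Sum>P\<in>{P \<in> prime_cycles F. cyc_len P dvd m}. of_nat (cyc_len P) * mtrace (pi_mat r u (SOME c. c \<in> P) ^\<^sub>m (m div cyc_len P)))
          = mtrace (A ^\<^sub>m m)" using trace_A_cycles[OF m(1)] by simp
      finally show ?thesis .
    qed
    have agree: "\<forall>i\<le>n. fps_nth ?f i = fps_nth g i"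
    proof (intro allI impI)
      fix i assume i: "i \<le> n"
      show "fps_nth ?f i = fps_nth g i" unfolding f1 g2
        by (rule prodF_compare[OF L1pos L2pos _ i]) (simp add: PS1 PS2)
    qed
    have g0: "fps_nth g 0 = 1" using g2 prodF_0[OF L2pos] by simp
    have "fps_nth (zeta_fps F r u) n = fps_nth (\<Prod>P\<in>?S. inverse (cycle_factor r u P)) n"
      unfolding zeta_fps_def by simp
    also have "(\<Prod>P\<in>?S. inverse (cycle_factor r u P)) = inverse g"
      unfolding g_def Ps(1)[symmetric] prod.distinct_set_conv_list[OF Ps(2)] by (simp add: inverse_prod_list o_def)
    also have "fps_nth (inverse g) n = fps_nth (inverse ?f) n"
      using inverse_agree[of g ?f n] g0 f0 agree by simp
    finally show ?thesis .
  qed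
  have z: "zeta_fps F r u = inverse ?f" by (rule fps_ext) (rule coeff)
  show ?thesis unfolding z by (rule inv_inv[OF f0])
qed

end

theorem theorem2:
  fixes V :: "'v set" and F :: "'v set set" and r :: "'v dedge \<Rightarrow> nat"
    and u :: "'v dedge \<Rightarrow> 'v dedge \<Rightarrow> complex mat" and es :: "'v dedge list"
  assumes "finite V" and "F \<subseteq> Pow V" and "{} \<notin> F"
    and "\<forall>e \<in> dedges F. r e > 0"
    and "\<forall>e \<in> dedges F. \<forall>e' \<in> dedges F. feeds e' e \<longrightarrow> u e' e \<in> carrier_mat (r e) (r e')"
    and "distinct es" and "set es = dedges F"
  shows "inverse (zeta_fps F r u) =
    det (1\<^sub>m (dim_row (M_mat r u es)) - map_mat (\<lambda>x. fps_X * fps_const x) (M_mat r u es))"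
proof -
  have sub: "dedges F \<subseteq> Pow V \<times> V" using assms(2) unfolding dedges_def by auto
  have finD: "finite (dedges F)" using assms(1) by (intro finite_subset[OF sub]) auto
  interpret hg F r u es
  proof (unfold_locales)
    show "finite (dedges F)" by (rule finD)
    show "\<And>e e'. e \<in> dedges F \<Longrightarrow> e' \<in> dedges F \<Longrightarrow> feeds e' e \<Longrightarrow> u e' e \<in> carrier_mat (r e) (r e')"
      using assms(5) by blast
    show "distinct es" by (rule assms(6))
    show "set es = dedges F" by (rule assms(7))
  qed
  show ?thesis by (rule main_identity)
qed

end
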